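(* Let $\mathbb{K}\in\{\mathbb{R},\mathbb{C}\}$, let $\mathcal{X}$ be a separable topological $\mathbb{K}$-vector space whose topological dual $\mathcal{X}^{\ast}$ separates the points of $\mathcal{X}$, and let $\mathcal{U}$ be a $0$-neighborhood in $\mathcal{X}$ such that there exists an infinite set $\{\sigma_n\}_{n\in\mathbb{N}}$ of linearly independent elements of $\mathcal{X}^{\ast}$ with $\sup_{A\in\mathcal{U}}|\sigma_n(A)|<\infty$ for every $n$. Then $\mathcal{D}_{0,\mathcal{U}}$ (and hence $\mathcal{D}_{\mathcal{U}}\supseteq\mathcal{D}_{0,\mathcal{U}}$) is dense in $\mathbf{CU}_{\mathcal{U}}(\mathcal{X}^{\ast})$ with respect to the weak*-Hausdorff hypertopology.
   Context: Topological vector spaces are Hausdorff. $\mathcal{X}^{\ast}$ carries the weak* topology. $\mathcal{U}^{\circ}=\{\sigma\in\mathcal{X}^{\ast}:|\sigma(A)|\le1\ \forall A\in\mathcal{U}\}$; $\mathbf{CU}_{\mathcal{U}}(\mathcal{X}^{\ast})$ is the set of nonempty convex weak*-closed subsets of $\mathcal{U}^{\circ}$. For a convex set $C\subseteq\mathcal{X}^{\ast}$, $\mathcal{E}(C)$ is its set of extreme points, and a point $\sigma_0\in C$ is exposed if there is $A\in\mathcal{X}$ such that $\sigma\mapsto\mathrm{Re}\,\sigma(A)$ attains its maximum on $C$ uniquely at $\sigma_0$; $\mathcal{E}_0(C)$ is the set of exposed points. $\mathcal{D}_{\mathcal{U}}=\{U\in\mathbf{CU}_{\mathcal{U}}(\mathcal{X}^{\ast}):U=\overline{\mathcal{E}(U)}\}$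 and $\mathcal{D}_{0,\mathcal{U}}=\{U\in\mathbf{CU}_{\mathcal{U}}(\mathcal{X}^{\ast}):U=\overline{\mathcal{E}_0(U)}\}$ (weak*-closures). The weak*-Hausdorff hypertopology is generated by the extended pseudometrics $d_H^{(A)}(F,\tilde F)=\max\{\sup_{\sigma\in F}\inf_{\tilde\sigma\in\tilde F}|(\sigma-\tilde\sigma)(A)|,\ \sup_{\tilde\sigma\in\tilde F}\inf_{\sigma\in F}|(\sigma-\tilde\sigma)(A)|\}$, $A\in\mathcal{X}$. *)

theory Defs
  imports "HOL-Analysis.Analysis"
begin

text \<open>Scalar field 'k (instantiated to real or complex), space X = type 'a with its
  type-class topology (Hausdorff via t2_space), scalar multiplication sm.\<close>

definition tvs :: "('k::real_normed_field \<Rightarrow> 'a::{ab_group_add,t2_space} \<Rightarrow> 'a) \<Rightarrow> bool" where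
  "tvs sm \<longleftrightarrow> Vector_Spaces.vector_space sm \<and>
     continuous_on UNIV (\<lambda>p::'a \<times> 'a. fst p + snd p) \<and>
     continuous_on UNIV (\<lambda>p::'k \<times> 'a. sm (fst p) (snd p))"

definition tdual :: "('k::real_normed_field \<Rightarrow> 'a::{ab_group_add,topological_space} \<Rightarrow> 'a) \<Rightarrow> ('a \<Rightarrow> 'k) set" where
  "tdual sm = {\<sigma>. (\<forall>x y. \<sigma> (x + y) = \<sigma> x + \<sigma> y) \<and> (\<forall>c x. \<sigma> (sm c x) = c * \<sigma> x)
                     \<and> continuous_on UNIV \<sigma>}"

text \<open>Weak* topology = topology of pointwise convergence on the dual, i.e. the subspace
  topology of the product topology on 'a \<Rightarrow> 'k.\<close>
definition weakstar :: "('k::real_normed_field \<Rightarrow> 'a::{ab_group_add,topological_space} \<Rightarrow> 'a) \<Rightarrow> ('a \<Rightarrow> 'k) topology" where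
  "weakstar sm = subtopology euclidean (tdual sm)"

definition polar :: "('k::real_normed_field \<Rightarrow> 'a::{ab_group_add,topological_space} \<Rightarrow> 'a) \<Rightarrow> 'a set \<Rightarrow> ('a \<Rightarrow> 'k) set" where
  "polar sm U = {\<sigma> \<in> tdual sm. \<forall>A\<in>U. norm (\<sigma> A) \<le> 1}"

definition fconvex :: "('a \<Rightarrow> 'k::real_normed_field) set \<Rightarrow> bool" where
  "fconvex C \<longleftrightarrow> (\<forall>x\<in>C. \<forall>y\<in>C. \<forall>t::real. 0 \<le> t \<and> t \<le> 1 \<longrightarrow>
      (\<lambda>A. of_real t * x A + of_real (1 - t) * y A) \<in> C)"

definition CU :: "('k::real_normed_field \<Rightarrow> 'a::{ab_group_add,topological_space} \<Rightarrow> 'a) \<Rightarrow> 'a set \<Rightarrow> ('a \<Rightarrow> 'k) set set" where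
  "CU sm U = {C. C \<noteq> {} \<and> fconvex C \<and> closedin (weakstar sm) C \<and> C \<subseteq> polar sm U}"

definition extreme_pts :: "('a \<Rightarrow> 'k::real_normed_field) set \<Rightarrow> ('a \<Rightarrow> 'k) set" where
  "extreme_pts C = {\<sigma> \<in> C. \<not> (\<exists>x\<in>C. \<exists>y\<in>C. \<exists>t::real. 0 < t \<and> t < 1 \<and> x \<noteq> y \<and>
       \<sigma> = (\<lambda>A. of_real t * x A + of_real (1 - t) * y A))}"

text \<open>Exposed points; re is the real part (identity for real scalars, Re for complex).\<close>
definition exposed_pts :: "('k \<Rightarrow> real) \<Rightarrow> ('a \<Rightarrow> 'k) set \<Rightarrow> ('a \<Rightarrow> 'k) set" where
  "exposed_pts re C = {\<sigma>0 \<in> C. \<exists>A. \<forall>\<sigma>\<in>C. \<sigma> \<noteq> \<sigma>0 \<longrightarrow> re (\<sigma> A) < re (\<sigma>0 A)}"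

definition DU :: "('k::real_normed_field \<Rightarrow> 'a::{ab_group_add,topological_space} \<Rightarrow> 'a) \<Rightarrow> 'a set \<Rightarrow> ('a \<Rightarrow> 'k) set set" where
  "DU sm U = {C \<in> CU sm U. C = weakstar sm closure_of extreme_pts C}"

definition D0U :: "('k::real_normed_field \<Rightarrow> 'a::{ab_group_add,topological_space} \<Rightarrow> 'a) \<Rightarrow> ('k \<Rightarrow> real) \<Rightarrow> 'a set \<Rightarrow> ('a \<Rightarrow> 'k) set set" where
  "D0U sm re U = {C \<in> CU sm U. C = weakstar sm closure_of exposed_pts re C}"

definition hdist :: "'a::ab_group_add \<Rightarrow> ('a \<Rightarrow> 'k::real_normed_field) set \<Rightarrow> ('a \<Rightarrow> 'k) set \<Rightarrow> ereal" where
  "hdist A F G = max (SUP \<sigma>\<in>F. INF \<tau>\<in>G. ereal (norm (\<sigma> A - \<tau> A)))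
                     (SUP \<tau>\<in>G. INF \<sigma>\<in>F. ereal (norm (\<sigma> A - \<tau> A)))"

text \<open>Weak*-Hausdorff hypertopology: the topology generated by the family of extended
  pseudometrics hdist A, A \<in> X (open sets = sets containing a finite-intersection ball
  around each of their points).\<close>
definition hyper_top :: "(('a::ab_group_add \<Rightarrow> 'k::real_normed_field) set) topology" where
  "hyper_top = topology (\<lambda>S. \<forall>F\<in>S. \<exists>As \<epsilon>. finite As \<and> \<epsilon> > 0 \<and>
      {G. \<forall>A\<in>As. hdist A F G < ereal \<epsilon>} \<subseteq> S)"

definition lin_indep_seq :: "(nat \<Rightarrow> 'a \<Rightarrow> 'k::field) \<Rightarrow> bool" where
  "lin_indep_seq \<sigma> \<longleftrightarrow> (\<forall>F c. finite F \<longrightarrow> (\<forall>x. (\<Sum>n\<in>F. c n * \<sigma> n x) = 0) \<longrightarrow> (\<forall>n\<in>F. c n = 0))"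

end

theory Submission
  imports Defs "HOL-Library.Function_Algebras"
begin


definition lin :: "('k::real_normed_field \<Rightarrow> 'a::ab_group_add \<Rightarrow> 'a) \<Rightarrow> ('a \<Rightarrow> 'k) \<Rightarrow> bool" where
  "lin sm \<phi> \<longleftrightarrow> (\<forall>x y. \<phi> (x + y) = \<phi> x + \<phi> y) \<and> (\<forall>c x. \<phi> (sm c x) = c * \<phi> x)"

interpretation fs: Vector_Spaces.vector_space "(\<lambda>c f x. c * f x) :: 'k::field \<Rightarrow> ('a \<Rightarrow> 'k) \<Rightarrow> 'a \<Rightarrow> 'k"
  by unfold_locales (auto simp: fun_eq_iff algebra_simps)

lemma fs_sum_apply: "(\<Sum>i\<in>F. (f i :: 'a \<Rightarrow> 'k::field)) x = (\<Sum>i\<in>F. f i x)"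
  by (induction F rule: infinite_finite_induct) auto

lemma lin_span:
  assumes "\<forall>\<phi>\<in>S. lin sm \<phi>" "\<psi> \<in> fs.span S"
  shows "lin sm \<psi>"
  using assms(2)
proof (induction rule: fs.span_induct_alt)
  case base
  then show ?case by (simp add: lin_def)
next
  case (step c x y)
  then show ?case using assms(1) by (auto simp: lin_def algebra_simps)
qed

lemma span_vanish:
  assumes "\<forall>\<phi>\<in>S. \<phi> D = 0" "\<psi> \<in> fs.span S"
  shows "\<psi> D = (0::'k::field)"
  using assms(2)
proof (induction rule: fs.span_induct_alt)
  case base
  then show ?case by simp
next
  case (step c x y)
  then show ?case using assms(1) by auto
qed

lemma separation:
  fixes sm :: "'k::real_normed_field \<Rightarrow> 'a::ab_group_add \<Rightarrow> 'a"
  assumes "finite S"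
  shows "\<forall>\<psi>. (\<forall>\<phi>\<in>S. lin sm \<phi>) \<longrightarrow> lin sm \<psi> \<longrightarrow> \<psi> \<notin> fs.span S \<longrightarrow>
           (\<exists>D. (\<forall>\<phi>\<in>S. \<phi> D = 0) \<and> \<psi> D = 1)"
  using assms
proof (induction S rule: finite_induct)
  case empty
  show ?case
  proof (intro allI impI)
    fix \<psi> :: "'a \<Rightarrow> 'k"
    assume l: "lin sm \<psi>" and ns: "\<psi> \<notin> fs.span {}"
    then have "\<psi> \<noteq> 0" by auto
    then obtain x where x: "\<psi> x \<noteq> 0" by (auto simp: fun_eq_iff)
    have "\<psi> (sm (1 / \<psi> x) x) = 1" using l x by (simp add: lin_def)
    then show "\<exists>D. (\<forall>\<phi>\<in>{}. \<phi> D = 0) \<and> \<psi> D = 1" by blast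
  qed
next
  case (insert \<phi>0 S)
  show ?case
  proof (intro allI impI)
    fix \<psi> :: "'a \<Rightarrow> 'k"
    assume lS: "\<forall>\<phi>\<in>insert \<phi>0 S. lin sm \<phi>" and l: "lin sm \<psi>" and ns: "\<psi> \<notin> fs.span (insert \<phi>0 S)"
    show "\<exists>D. (\<forall>\<phi>\<in>insert \<phi>0 S. \<phi> D = 0) \<and> \<psi> D = 1"
    proof (cases "\<phi>0 \<in> fs.span S")
      case True
      then have "\<psi> \<notin> fs.span S" using ns fs.span_redundant by metis
      then obtain D where D: "\<forall>\<phi>\<in>S. \<phi> D = 0" "\<psi> D = 1" using insert.IH lS l by auto
      have "\<phi>0 D = 0" using span_vanish[OF D(1) True] .
      then show ?thesis using D by auto
    next
      case False
      then obtain E where E: "\<forall>\<phi>\<in>S. \<phi> E = 0" "\<phi>0 E = 1" using insert.IH lS by auto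
      define \<psi>' where "\<psi>' = (\<lambda>x. \<psi> x - \<psi> E * \<phi>0 x)"
      have l0: "lin sm \<phi>0" using lS by auto
      have l': "lin sm \<psi>'" using l l0 by (auto simp: lin_def \<psi>'_def algebra_simps)
      have "\<psi>' \<notin> fs.span S"
      proof
        assume "\<psi>' \<in> fs.span S"
        moreover have "\<psi>' = \<psi> - (\<lambda>x. \<psi> E * \<phi>0 x)" by (auto simp: \<psi>'_def fun_eq_iff)
        ultimately have "\<exists>k. \<psi> - (\<lambda>x. k * \<phi>0 x) \<in> fs.span S" by auto
        then have "\<psi> \<in> fs.span (insert \<phi>0 S)" using fs.span_breakdown_eq by blast
        then show False using ns by blast
      qed
      then obtain D' where D': "\<forall>\<phi>\<in>S. \<phi> D' = 0" "\<psi>' D' = 1" using insert.IH lS l' by auto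
      define D where "D = D' + sm (- \<phi>0 D') E"
      have Dv: "\<phi> D = \<phi> D' + (- \<phi>0 D') * \<phi> E" if "lin sm \<phi>" for \<phi>
        using that by (simp add: D_def lin_def)
      have "\<forall>\<phi>\<in>insert \<phi>0 S. \<phi> D = 0"
      proof
        fix \<phi> assume "\<phi> \<in> insert \<phi>0 S"
        then show "\<phi> D = 0"
        proof
          assume "\<phi> = \<phi>0" then show ?thesis using Dv[OF l0] E by simp
        next
          assume "\<phi> \<in> S" then show ?thesis using Dv[of \<phi>] lS D'(1) E(1) by auto
        qed
      qed
      moreover have "\<psi> D = 1" using D' E l by (auto simp: D_def lin_def \<psi>'_def algebra_simps)
      ultimately show ?thesis by blast
    qed
  qed
qed

lemma indep_seq_inj:
  assumes "lin_indep_seq (\<sigma> :: nat \<Rightarrow> 'a \<Rightarrow> 'k::field)"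
  shows "inj \<sigma>"
proof (rule injI, rule ccontr)
  fix i j assume e: "\<sigma> i = \<sigma> j" and ne: "i \<noteq> j"
  define c where "c = (\<lambda>n. if n = i then (1::'k) else -1)"
  have "\<forall>x. (\<Sum>n\<in>{i,j}. c n * \<sigma> n x) = 0" using e ne by (simp add: c_def)
  then have "\<forall>n\<in>{i,j}. c n = 0" using assms[unfolded lin_indep_seq_def, rule_format, of "{i,j}" c] by simp
  then show False by (simp add: c_def)
qed

lemma indep_seq_not_span:
  assumes "lin_indep_seq (\<sigma> :: nat \<Rightarrow> 'a \<Rightarrow> 'k::field)" "finite S"
  shows "\<exists>i. \<sigma> i \<notin> fs.span S"
proof (rule ccontr)
  assume "\<not> ?thesis"
  then have sub: "range \<sigma> \<subseteq> fs.span S" by auto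
  have inj: "inj \<sigma>" using indep_seq_inj[OF assms(1)] .
  have ind: "fs.independent (range \<sigma>)"
    unfolding fs.independent_explicit_module
  proof (intro allI impI)
    fix t u v assume t: "finite t" "t \<subseteq> range \<sigma>" and s: "(\<Sum>v\<in>t. (\<lambda>x. u v * v x)) = 0" and v: "v \<in> t"
    obtain F where F: "finite F" "t = \<sigma> ` F" using finite_subset_image[OF t] by auto
    have inF: "inj_on \<sigma> F" using inj by (auto intro: inj_on_subset)
    have "\<forall>x. (\<Sum>n\<in>F. u (\<sigma> n) * \<sigma> n x) = 0"
    proof
      fix x
      have "(\<Sum>v\<in>t. (\<lambda>x. u v * v x)) x = 0" using s by simp
      then show "(\<Sum>n\<in>F. u (\<sigma> n) * \<sigma> n x) = 0"
        unfolding F(2) fs_sum_apply sum.reindex[OF inF] by simp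
    qed
    then have "\<forall>n\<in>F. u (\<sigma> n) = 0" using assms(1)[unfolded lin_indep_seq_def, rule_format, OF F(1), of "\<lambda>n. u (\<sigma> n)"] by blast
    then show "u v = 0" using v F(2) by auto
  qed
  have "finite (range \<sigma>)" using fs.independent_span_bound[OF assms(2) ind sub] by simp
  then show False using inj finite_imageD infinite_UNIV_nat by blast
qed



definition bddU :: "'a set \<Rightarrow> ('a \<Rightarrow> 'k::real_normed_field) \<Rightarrow> bool" where
  "bddU U \<phi> \<longleftrightarrow> (\<exists>M. \<forall>A\<in>U. norm (\<phi> A) \<le> M)"

lemma bddU_diff: "bddU U f \<Longrightarrow> bddU U g \<Longrightarrow> bddU U (\<lambda>A. f A - g A)"
  unfolding bddU_def
proof (elim exE)
  fix M1 M2 assume "\<forall>A\<in>U. norm (f A) \<le> M1" "\<forall>A\<in>U. norm (g A) \<le> M2"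
  then have "\<forall>A\<in>U. norm (f A - g A) \<le> M1 + M2"
    by (meson add_mono norm_triangle_ineq4 order_trans)
  then show "\<exists>M. \<forall>A\<in>U. norm (f A - g A) \<le> M" by blast
qed

lemma bddU_add: "bddU U f \<Longrightarrow> bddU U g \<Longrightarrow> bddU U (\<lambda>A. f A + g A)"
  unfolding bddU_def
proof (elim exE)
  fix M1 M2 assume "\<forall>A\<in>U. norm (f A) \<le> M1" "\<forall>A\<in>U. norm (g A) \<le> M2"
  then have "\<forall>A\<in>U. norm (f A + g A) \<le> M1 + M2"
    by (meson add_mono norm_triangle_ineq order_trans)
  then show "\<exists>M. \<forall>A\<in>U. norm (f A + g A) \<le> M" by blast
qed

lemma bddU_cmult: "bddU U f \<Longrightarrow> bddU U (\<lambda>A. c * f A)"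
  unfolding bddU_def
proof (elim exE)
  fix M1 assume "\<forall>A\<in>U. norm (f A) \<le> M1"
  then have "\<forall>A\<in>U. norm (c * f A) \<le> norm c * M1"
    by (simp add: norm_mult mult_left_mono)
  then show "\<exists>M. \<forall>A\<in>U. norm (c * f A) \<le> M" by blast
qed

lemma bddU_sum: "finite F \<Longrightarrow> (\<forall>i\<in>F. bddU U (f i)) \<Longrightarrow> bddU U (\<lambda>A. \<Sum>i\<in>F. f i A)"
proof (induction F rule: finite_induct)
  case empty
  then show ?case by (auto simp: bddU_def)
next
  case (insert x F)
  then show ?case using bddU_add[of U "f x" "\<lambda>A. \<Sum>i\<in>F. f i A"] by simp
qed

lemma lin_sum: "(\<forall>i\<in>F. lin sm (f i)) \<Longrightarrow> lin sm (\<lambda>A. \<Sum>i\<in>F. c i * f i A)"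
  by (simp add: lin_def sum.distrib sum_distrib_left algebra_simps)

lemma lin_diff: "lin sm f \<Longrightarrow> lin sm g \<Longrightarrow> lin sm (\<lambda>A. f A - g A)"
  by (simp add: lin_def algebra_simps)

definition binv :: "('k::real_normed_field \<Rightarrow> 'a::ab_group_add \<Rightarrow> 'a) \<Rightarrow> 'a set \<Rightarrow> ('a \<Rightarrow> 'k) set \<Rightarrow> nat \<Rightarrow> (nat \<Rightarrow> 'a \<Rightarrow> 'k) \<times> (nat \<Rightarrow> 'a) \<Rightarrow> bool" where
  "binv sm U P n x \<longleftrightarrow> (\<forall>k<n. lin sm (fst x k) \<and> bddU U (fst x k) \<and> (\<forall>\<phi>\<in>P. \<phi> (snd x k) = 0)) \<and>
     (\<forall>k<n. \<forall>j<n. fst x k (snd x j) = (if k = j then 1 else 0))"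

lemma binv_step:
  fixes sm :: "'k::real_normed_field \<Rightarrow> 'a::ab_group_add \<Rightarrow> 'a"
  assumes P: "finite P" "\<forall>\<phi>\<in>P. lin sm \<phi> \<and> bddU U \<phi>"
    and \<sigma>: "lin_indep_seq \<sigma>" "\<forall>n. lin sm (\<sigma> n) \<and> bddU U (\<sigma> n)"
    and I: "binv sm U P n (T, Dd)"
  shows "\<exists>y. binv sm U P (Suc n) y \<and> (\<forall>k<n. fst y k = T k \<and> snd y k = Dd k)"
proof -
  define S where "S = P \<union> T ` {..<n}"
  have fS: "finite S" using P(1) by (simp add: S_def)
  obtain i where i: "\<sigma> i \<notin> fs.span S" using indep_seq_not_span[OF \<sigma>(1) fS] by blast
  have linS: "\<forall>\<phi>\<in>S. lin sm \<phi>" using P(2) I by (auto simp: S_def binv_def)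
  have sep: "(\<forall>\<phi>\<in>S. lin sm \<phi>) \<longrightarrow> lin sm (\<sigma> i) \<longrightarrow> \<sigma> i \<notin> fs.span S \<longrightarrow> (\<exists>D. (\<forall>\<phi>\<in>S. \<phi> D = 0) \<and> \<sigma> i D = 1)"
    using separation[OF fS, of sm] by (rule spec)
  have "lin sm (\<sigma> i)" using \<sigma>(2) by blast
  then obtain D where D: "\<forall>\<phi>\<in>S. \<phi> D = 0" "\<sigma> i D = 1"
    using sep linS i by blast
  define \<tau> where "\<tau> = (\<lambda>A. \<sigma> i A - (\<Sum>k<n. \<sigma> i (Dd k) * T k A))"
  have lT: "\<forall>k<n. lin sm (T k) \<and> bddU U (T k)" using I by (auto simp: binv_def)
  have l\<tau>: "lin sm \<tau>"
  proof -
    have "lin sm (\<lambda>A. \<Sum>k<n. \<sigma> i (Dd k) * T k A)" using lT by (intro lin_sum) auto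
    then show ?thesis using \<sigma>(2) unfolding \<tau>_def by (intro lin_diff) auto
  qed
  have b\<tau>: "bddU U \<tau>" unfolding \<tau>_def
    using \<sigma>(2) lT by (intro bddU_diff bddU_sum bddU_cmult ballI) auto
  have TD: "T k D = 0" if "k < n" for k using D(1) that by (auto simp: S_def)
  have \<tau>D: "\<tau> D = 1" using D(2) TD by (simp add: \<tau>_def)
  have \<tau>Dd: "\<tau> (Dd j) = 0" if "j < n" for j
  proof -
    have "(\<Sum>k<n. \<sigma> i (Dd k) * T k (Dd j)) = (\<Sum>k<n. if k = j then \<sigma> i (Dd j) else 0)"
      using I that by (intro sum.cong) (auto simp: binv_def)
    also have "\<dots> = \<sigma> i (Dd j)" using that by (simp add: sum.delta)
    finally show ?thesis by (simp add: \<tau>_def)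
  qed
  have PD: "\<forall>\<phi>\<in>P. \<phi> D = 0" using D(1) by (auto simp: S_def)
  define y where "y = (T(n := \<tau>), Dd(n := D))"
  have "binv sm U P (Suc n) y"
    unfolding binv_def y_def fst_conv snd_conv
  proof (intro conjI allI impI ballI)
    fix k assume "k < Suc n"
    then show "lin sm ((T(n := \<tau>)) k)" "bddU U ((T(n := \<tau>)) k)" using lT l\<tau> b\<tau> by (auto simp: less_Suc_eq)
  next
    fix k \<phi> assume "k < Suc n" "\<phi> \<in> P"
    then show "\<phi> ((Dd(n := D)) k) = 0" using I PD by (auto simp: less_Suc_eq binv_def)
  next
    fix k j assume k: "k < Suc n" and j: "j < Suc n"
    show "(T(n := \<tau>)) k ((Dd(n := D)) j) = (if k = j then 1 else 0)"
    proof (cases "k = n")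
      case True
      then show ?thesis using j \<tau>D \<tau>Dd by (auto simp: less_Suc_eq)
    next
      case False
      then have "k < n" using k by auto
      then show ?thesis using j TD I False by (auto simp: less_Suc_eq binv_def)
    qed
  qed
  moreover have "\<forall>k<n. fst y k = T k \<and> snd y k = Dd k" by (simp add: y_def)
  ultimately show ?thesis by blast
qed

lemma biorth:
  fixes sm :: "'k::real_normed_field \<Rightarrow> 'a::ab_group_add \<Rightarrow> 'a"
  assumes P: "finite P" "\<forall>\<phi>\<in>P. lin sm \<phi> \<and> bddU U \<phi>"
    and \<sigma>: "lin_indep_seq \<sigma>" "\<forall>n. lin sm (\<sigma> n) \<and> bddU U (\<sigma> n)"
  shows "\<exists>\<tau> D. (\<forall>n::nat. lin sm (\<tau> n) \<and> bddU U (\<tau> n)) \<and> (\<forall>n. \<forall>\<phi>\<in>P. \<phi> (D n) = 0) \<and>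
            (\<forall>n k. \<tau> n (D k) = (if n = k then 1 else 0))"
proof -
  have "\<exists>f. \<forall>n. binv sm U P n (f n) \<and> (\<forall>k<n. fst (f (Suc n)) k = fst (f n) k \<and> snd (f (Suc n)) k = snd (f n) k)"
  proof (rule dependent_nat_choice)
    show "\<exists>x. binv sm U P 0 x" by (rule exI[of _ "(\<lambda>_. 0, \<lambda>_. 0)"]) (simp add: binv_def)
  next
    fix x n assume "binv sm U P n x"
    then have "binv sm U P n (fst x, snd x)" by simp
    then show "\<exists>y. binv sm U P (Suc n) y \<and> (\<forall>k<n. fst y k = fst x k \<and> snd y k = snd x k)"
      using binv_step[OF P \<sigma>] by blast
  qed
  then obtain f where f: "\<And>n. binv sm U P n (f n)"
    "\<And>n k. k < n \<Longrightarrow> fst (f (Suc n)) k = fst (f n) k \<and> snd (f (Suc n)) k = snd (f n) k" by blast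
  have stab: "fst (f (Suc k + d)) k = fst (f (Suc k)) k \<and> snd (f (Suc k + d)) k = snd (f (Suc k)) k" for k d
  proof (induction d)
    case 0
    then show ?case by simp
  next
    case (Suc d)
    then show ?case using f(2)[of k "Suc k + d"] by simp
  qed
  have stab2: "fst (f N) k = fst (f (Suc k)) k \<and> snd (f N) k = snd (f (Suc k)) k" if "k < N" for k N
  proof -
    have "Suc k + (N - Suc k) = N" using that by simp
    then show ?thesis using stab[of k "N - Suc k"] by simp
  qed
  define \<tau> where "\<tau> k = fst (f (Suc k)) k" for k
  define D where "D k = snd (f (Suc k)) k" for k
  show ?thesis
  proof (rule exI[of _ \<tau>], rule exI[of _ D], intro conjI allI ballI)
    fix n
    show "lin sm (\<tau> n)" "bddU U (\<tau> n)" using f(1)[of "Suc n"] by (auto simp: binv_def \<tau>_def)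
  next
    fix n \<phi> assume "\<phi> \<in> P"
    then show "\<phi> (D n) = 0" using f(1)[of "Suc n"] by (auto simp: binv_def D_def)
  next
    fix n k
    define N where "N = Suc (max n k)"
    have "n < N" "k < N" by (auto simp: N_def)
    then have "\<tau> n = fst (f N) n" "D k = snd (f N) k" using stab2[of n N] stab2[of k N] by (simp_all add: \<tau>_def D_def)
    then show "\<tau> n (D k) = (if n = k then 1 else 0)" using f(1)[of N] \<open>n < N\<close> \<open>k < N\<close>
      by (simp add: binv_def)
  qed
qed



lemma lin_add: "lin sm \<phi> \<Longrightarrow> \<phi> (x + y) = \<phi> x + \<phi> y"
  unfolding lin_def by blast

lemma lin_sm: "lin sm \<phi> \<Longrightarrow> \<phi> (sm c x) = c * \<phi> x"
  unfolding lin_def by blast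

lemma lin_zero: "lin sm \<phi> \<Longrightarrow> \<phi> 0 = 0"
proof -
  assume l: "lin sm \<phi>"
  have "\<phi> (0 + 0) = \<phi> 0 + \<phi> 0" by (rule lin_add[OF l])
  then show ?thesis by simp
qed

lemma lin_minus: "lin sm \<phi> \<Longrightarrow> \<phi> (- x) = - \<phi> x"
proof -
  assume l: "lin sm \<phi>"
  have "\<phi> (x + - x) = \<phi> x + \<phi> (- x)" by (rule lin_add[OF l])
  then have "0 = \<phi> x + \<phi> (- x)" using lin_zero[OF l] by simp
  then show ?thesis by (simp add: eq_neg_iff_add_eq_0 add.commute)
qed

lemma lin_diffx: "lin sm \<phi> \<Longrightarrow> \<phi> (x - y) = \<phi> x - \<phi> y"
  using lin_minus[of sm \<phi> y] lin_add[of sm \<phi> x "- y"] by simp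

lemma lin_sumx: "lin sm \<phi> \<Longrightarrow> \<phi> (\<Sum>i\<in>F. g i) = (\<Sum>i\<in>F. \<phi> (g i))"
proof (induction F rule: infinite_finite_induct)
  case (infinite F)
  then show ?case using lin_zero by auto
next
  case empty
  then show ?case using lin_zero by auto
next
  case (insert x F)
  then show ?case using lin_add[of sm \<phi>] by simp
qed

lemma tvs_cont_sm:
  fixes sm :: "'k::real_normed_field \<Rightarrow> 'a::{ab_group_add,t2_space} \<Rightarrow> 'a"
  assumes "tvs sm"
  shows "continuous_on UNIV (\<lambda>c. sm c A)"
proof -
  have c1: "continuous_on UNIV (\<lambda>p::'k \<times> 'a. sm (fst p) (snd p))" using assms by (simp add: tvs_def)
  have c2: "continuous_on UNIV (\<lambda>c::'k. (c, A))" by (intro continuous_intros)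
  show ?thesis using continuous_on_compose2[OF c1 c2] by simp
qed

lemma tvs_cont_sm2:
  fixes sm :: "'k::real_normed_field \<Rightarrow> 'a::{ab_group_add,t2_space} \<Rightarrow> 'a"
  assumes "tvs sm"
  shows "continuous_on UNIV (\<lambda>x. sm c x)"
proof -
  have c1: "continuous_on UNIV (\<lambda>p::'k \<times> 'a. sm (fst p) (snd p))" using assms by (simp add: tvs_def)
  have c2: "continuous_on UNIV (\<lambda>x::'a. (c, x))" by (intro continuous_intros)
  show ?thesis using continuous_on_compose2[OF c1 c2] by simp
qed

lemma tvs_cont_add:
  fixes sm :: "'k::real_normed_field \<Rightarrow> 'a::{ab_group_add,t2_space} \<Rightarrow> 'a"
  assumes "tvs sm"
  shows "continuous_on UNIV (\<lambda>x. x + (a::'a))"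
proof -
  have c1: "continuous_on UNIV (\<lambda>p::'a \<times> 'a. fst p + snd p)" using assms by (simp add: tvs_def)
  have c2: "continuous_on UNIV (\<lambda>x::'a. (x, a))" by (intro continuous_intros)
  show ?thesis using continuous_on_compose2[OF c1 c2] by simp
qed

lemma tvs_vs: "tvs sm \<Longrightarrow> Vector_Spaces.vector_space sm"
  by (simp add: tvs_def)

lemma absorb:
  fixes sm :: "'k::real_normed_field \<Rightarrow> 'a::{ab_group_add,t2_space} \<Rightarrow> 'a"
  assumes "tvs sm" "0 \<in> interior U"
  shows "\<exists>r>0. \<forall>\<phi> M. lin sm \<phi> \<longrightarrow> (\<forall>B\<in>U. norm (\<phi> B) \<le> M) \<longrightarrow> norm (\<phi> A) \<le> r * M"
proof -
  interpret vs: Vector_Spaces.vector_space sm using tvs_vs[OF assms(1)] .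
  have "open ((\<lambda>c. sm c A) -` interior U \<inter> UNIV)"
    using tvs_cont_sm[OF assms(1), of A] continuous_on_open_vimage[OF open_UNIV] by blast
  moreover have "(0::'k) \<in> (\<lambda>c. sm c A) -` interior U" using assms(2) by simp
  ultimately obtain d where d: "d > 0" "ball 0 d \<subseteq> (\<lambda>c. sm c A) -` interior U"
    by (metis Int_UNIV_right openE)
  define c :: 'k where "c = of_real (d / 2)"
  have "c \<in> ball 0 d" using d(1) by (simp add: c_def)
  then have cU: "sm c A \<in> U" using d(2) interior_subset by blast
  show ?thesis
  proof (intro exI[of _ "2 / d"] conjI allI impI)
    show "0 < 2 / d" using d by simp
  next
    fix \<phi> M assume l: "lin sm \<phi>" and b: "\<forall>B\<in>U. norm (\<phi> B) \<le> M"
    have "norm (c * \<phi> A) \<le> M" using b cU l by (metis lin_def)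
    then have "d / 2 * norm (\<phi> A) \<le> M" using d(1) by (simp add: c_def norm_mult)
    then show "norm (\<phi> A) \<le> 2 / d * M" using d(1) by (simp add: field_simps)
  qed
qed

lemma bounded_lin_cont:
  fixes sm :: "'k::real_normed_field \<Rightarrow> 'a::{ab_group_add,t2_space} \<Rightarrow> 'a"
  assumes "tvs sm" "0 \<in> interior U" "lin sm \<phi>" "\<forall>A\<in>U. norm (\<phi> A) \<le> 1"
  shows "continuous_on UNIV \<phi>"
  unfolding continuous_on_def
proof (intro ballI tendstoI)
  interpret vs: Vector_Spaces.vector_space sm using tvs_vs[OF assms(1)] .
  fix x :: 'a and e :: real assume e: "e > 0"
  define c :: 'k where "c = of_real (2 / e)"
  define h where "h = (\<lambda>y. sm c (y + - x))"
  have ch: "continuous_on UNIV h" unfolding h_def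
    by (rule continuous_on_compose2[OF tvs_cont_sm2[OF assms(1)] tvs_cont_add[OF assms(1)]]) auto
  define S where "S = h -` interior U"
  have oS: "open S" using ch continuous_on_open_vimage[OF open_UNIV] by (auto simp: S_def)
  have xS: "x \<in> S" using assms(2) by (simp add: S_def h_def)
  have "\<forall>y\<in>S. dist (\<phi> y) (\<phi> x) < e"
  proof
    fix y assume "y \<in> S"
    then have "h y \<in> U" using interior_subset by (auto simp: S_def)
    then have "norm (\<phi> (h y)) \<le> 1" using assms(4) by blast
    moreover have "\<phi> (h y) = c * (\<phi> y - \<phi> x)"
      using lin_sm[OF assms(3)] lin_diffx[OF assms(3)] by (simp add: h_def)
    ultimately have "norm c * norm (\<phi> y - \<phi> x) \<le> 1" by (metis norm_mult)
    moreover have "norm c = 2 / e" using e unfolding c_def norm_of_real by simp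
    ultimately have "2 / e * norm (\<phi> y - \<phi> x) \<le> 1" by simp
    then have "norm (\<phi> y - \<phi> x) \<le> e / 2" using e by (simp add: field_simps)
    then show "dist (\<phi> y) (\<phi> x) < e" using e by (simp add: dist_norm)
  qed
  then show "\<forall>\<^sub>F y in at x within UNIV. dist (\<phi> y) (\<phi> x) < e"
    using oS xS by (auto simp: eventually_at_topological)
qed

lemma bounded_lin_tdual:
  fixes sm :: "'k::real_normed_field \<Rightarrow> 'a::{ab_group_add,t2_space} \<Rightarrow> 'a"
  assumes "tvs sm" "0 \<in> interior U" "lin sm \<phi>" "\<forall>A\<in>U. norm (\<phi> A) \<le> 1"
  shows "\<phi> \<in> polar sm U"
  using bounded_lin_cont[OF assms] assms(3,4) by (auto simp: polar_def tdual_def lin_def)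

lemma tdual_lin: "\<phi> \<in> tdual sm \<Longrightarrow> lin sm \<phi>"
  by (simp add: tdual_def lin_def)



locale constr =
  fixes sm :: "'k::{real_normed_field,banach} \<Rightarrow> 'a::{ab_group_add,t2_space} \<Rightarrow> 'a"
    and U :: "'a set" and m :: nat and p :: "nat \<Rightarrow> 'a \<Rightarrow> 'k" and \<tau> :: "nat \<Rightarrow> 'a \<Rightarrow> 'k"
    and D :: "nat \<Rightarrow> 'a" and e :: "nat \<Rightarrow> real" and \<theta> :: real
  assumes tvs: "tvs sm" and U0: "0 \<in> interior U" and m: "m > 0"
    and plin: "\<forall>j<m. lin sm (p j)" and pU: "\<forall>j<m. \<forall>A\<in>U. norm (p j A) \<le> 1"
    and \<tau>lin: "\<forall>n. lin sm (\<tau> n)"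
    and pD: "\<forall>j<m. \<forall>k. p j (D k) = 0"
    and \<tau>D: "\<forall>n k. \<tau> n (D k) = (if n = k then 1 else 0)"
    and epos: "\<forall>n. e n > 0"
    and summ: "\<forall>A. summable (\<lambda>n. e n * norm (\<tau> n A))"
    and \<theta>: "0 \<le> \<theta>" "\<theta> \<le> 1"
    and polarb: "\<forall>A\<in>U. (\<Sum>n. e n * norm (\<tau> n A)) \<le> \<theta>"
begin

definition Bset :: "(nat \<Rightarrow> real) set" where
  "Bset = {x. (\<forall>j<m. 0 \<le> x j) \<and> (\<Sum>j<m. x j) = 1 \<and> (\<forall>N. (\<Sum>n<N. (x n)\<^sup>2) \<le> 1)}"

definition L :: "(nat \<Rightarrow> real) \<Rightarrow> 'a \<Rightarrow> 'k" where
  "L x = (\<lambda>A. (\<Sum>j<m. of_real ((1 - \<theta>) * x j) * p j A) + (\<Sum>n. of_real (x n * e n) * \<tau> n A))"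

lemma B_bound: "x \<in> Bset \<Longrightarrow> \<bar>x n\<bar> \<le> 1"
proof -
  assume x: "x \<in> Bset"
  have "(x n)\<^sup>2 \<le> (\<Sum>k<Suc n. (x k)\<^sup>2)"
    by (rule member_le_sum) auto
  also have "\<dots> \<le> 1" using x unfolding Bset_def by blast
  finally have "(x n)\<^sup>2 \<le> 1" .
  then show ?thesis by (simp add: abs_square_le_1)
qed

lemma term_bound: "x \<in> Bset \<Longrightarrow> norm (of_real (x n * e n) * \<tau> n A) \<le> e n * norm (\<tau> n A)"
proof -
  assume x: "x \<in> Bset"
  have "norm (of_real (x n * e n) * \<tau> n A) = \<bar>x n\<bar> * e n * norm (\<tau> n A)"
    using epos by (simp add: norm_mult abs_mult less_imp_le)
  also have "\<dots> \<le> 1 * e n * norm (\<tau> n A)"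
    using B_bound[OF x, of n] epos by (intro mult_right_mono) (auto simp: less_imp_le)
  finally show ?thesis by simp
qed

lemma summ_term: "x \<in> Bset \<Longrightarrow> summable (\<lambda>n. of_real (x n * e n) * \<tau> n A)"
  by (rule summable_comparison_test'[OF summ[rule_format, of A] term_bound])

lemma summ_term_norm: assumes x: "x \<in> Bset" shows "summable (\<lambda>n. norm (of_real (x n * e n) * \<tau> n A))"
  by (rule summable_comparison_test'[OF summ[rule_format, of A], where N=0]) (unfold real_norm_def abs_norm_cancel, rule term_bound[OF x])

lemma suminf_bound: "x \<in> Bset \<Longrightarrow> norm (\<Sum>n. of_real (x n * e n) * \<tau> n A) \<le> (\<Sum>n. e n * norm (\<tau> n A))"
proof -
  assume x: "x \<in> Bset"
  have "norm (\<Sum>n. of_real (x n * e n) * \<tau> n A) \<le> (\<Sum>n. norm (of_real (x n * e n) * \<tau> n A))"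
    by (rule summable_norm[OF summ_term_norm[OF x]])
  also have "\<dots> \<le> (\<Sum>n. e n * norm (\<tau> n A))"
    by (rule suminf_le[OF term_bound[OF x] summ_term_norm[OF x] summ[rule_format, of A]])
  finally show ?thesis .
qed

lemma L_lin: "x \<in> Bset \<Longrightarrow> lin sm (L x)"
proof -
  assume x: "x \<in> Bset"
  have add: "L x (a + b) = L x a + L x b" for a b
  proof -
    have "(\<Sum>n. of_real (x n * e n) * \<tau> n (a + b)) =
          (\<Sum>n. of_real (x n * e n) * \<tau> n a + of_real (x n * e n) * \<tau> n b)"
      by (simp add: lin_add[OF \<tau>lin[rule_format]] distrib_left)
    also have "\<dots> = (\<Sum>n. of_real (x n * e n) * \<tau> n a) + (\<Sum>n. of_real (x n * e n) * \<tau> n b)"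
      by (rule suminf_add[OF summ_term[OF x] summ_term[OF x], symmetric])
    finally have s: "(\<Sum>n. of_real (x n * e n) * \<tau> n (a + b)) = \<dots>" .
    have f: "(\<Sum>j<m. of_real ((1 - \<theta>) * x j) * p j (a + b)) =
         (\<Sum>j<m. of_real ((1 - \<theta>) * x j) * p j a) + (\<Sum>j<m. of_real ((1 - \<theta>) * x j) * p j b)"
      unfolding sum.distrib[symmetric] using plin by (intro sum.cong) (auto simp: lin_add distrib_left)
    show ?thesis unfolding L_def using s f by (simp add: algebra_simps)
  qed
  have hom: "L x (sm c a) = c * L x a" for c a
  proof -
    have "(\<Sum>n. of_real (x n * e n) * \<tau> n (sm c a)) = (\<Sum>n. c * (of_real (x n * e n) * \<tau> n a))"
      by (simp add: lin_sm[OF \<tau>lin[rule_format]] mult.left_commute)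
    also have "\<dots> = c * (\<Sum>n. of_real (x n * e n) * \<tau> n a)"
      by (rule suminf_mult[OF summ_term[OF x]])
    finally have s: "(\<Sum>n. of_real (x n * e n) * \<tau> n (sm c a)) = \<dots>" .
    have f: "(\<Sum>j<m. of_real ((1 - \<theta>) * x j) * p j (sm c a)) = c * (\<Sum>j<m. of_real ((1 - \<theta>) * x j) * p j a)"
      unfolding sum_distrib_left using plin by (intro sum.cong) (auto simp: lin_sm mult.left_commute)
    show ?thesis unfolding L_def using s f by (simp add: algebra_simps)
  qed
  show ?thesis using add hom by (simp add: lin_def)
qed

lemma L_U: "x \<in> Bset \<Longrightarrow> A \<in> U \<Longrightarrow> norm (L x A) \<le> 1"
proof -
  assume x: "x \<in> Bset" and A: "A \<in> U"
  have "norm (\<Sum>j<m. of_real ((1 - \<theta>) * x j) * p j A) \<le> (\<Sum>j<m. norm (of_real ((1 - \<theta>) * x j) * p j A))"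
    by (rule norm_sum)
  also have "\<dots> \<le> (\<Sum>j<m. (1 - \<theta>) * x j)"
  proof (rule sum_mono)
    fix j assume j: "j \<in> {..<m}"
    have "x j \<ge> 0" using j x by (simp add: Bset_def)
    then have "norm (of_real ((1 - \<theta>) * x j) :: 'k) = (1 - \<theta>) * x j"
      using \<theta> unfolding norm_of_real by simp
    then have "norm (of_real ((1 - \<theta>) * x j) * p j A) = (1 - \<theta>) * x j * norm (p j A)"
      by (simp only: norm_mult)
    also have "\<dots> \<le> (1 - \<theta>) * x j * 1"
      using j x \<theta> pU A by (intro mult_left_mono) (auto simp: Bset_def)
    finally show "norm (of_real ((1 - \<theta>) * x j) * p j A) \<le> (1 - \<theta>) * x j" by simp
  qed
  also have "\<dots> = 1 - \<theta>" using x by (simp add: Bset_def sum_distrib_left[symmetric])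
  finally have f: "norm (\<Sum>j<m. of_real ((1 - \<theta>) * x j) * p j A) \<le> 1 - \<theta>" .
  have s: "norm (\<Sum>n. of_real (x n * e n) * \<tau> n A) \<le> \<theta>"
    using suminf_bound[OF x, of A] polarb A by auto
  show ?thesis unfolding L_def using f s norm_triangle_ineq[of "\<Sum>j<m. of_real ((1 - \<theta>) * x j) * p j A"
      "\<Sum>n. of_real (x n * e n) * \<tau> n A"] by linarith
qed

lemma L_polar: "x \<in> Bset \<Longrightarrow> L x \<in> polar sm U"
  using bounded_lin_tdual[OF tvs U0 L_lin] L_U by blast

lemma L_D: "x \<in> Bset \<Longrightarrow> L x (D k) = of_real (x k * e k)"
proof -
  assume x: "x \<in> Bset"
  have f: "(\<Sum>j<m. of_real ((1 - \<theta>) * x j) * p j (D k)) = 0" using pD by simp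
  have "(\<lambda>n. of_real (x n * e n) * \<tau> n (D k)) = (\<lambda>n. if n = k then of_real (x n * e n) else 0)"
    using \<tau>D by auto
  then have "(\<lambda>n. of_real (x n * e n) * \<tau> n (D k)) sums of_real (x k * e k)"
    using sums_single[of k "\<lambda>n. of_real (x n * e n)"] by simp
  then show ?thesis unfolding L_def using f by (simp add: sums_iff)
qed

end


lemma coord_cont: "continuous_on S (\<lambda>x::nat \<Rightarrow> real. x n)"
  by (rule continuous_on_subset[OF continuous_on_product_coordinates]) simp

lemma tendsto_coord:
  fixes f :: "'b \<Rightarrow> nat \<Rightarrow> real"
  assumes "\<And>i. ((\<lambda>c. f c i) \<longlongrightarrow> l i) F"
  shows "(f \<longlongrightarrow> l) F"
proof -
  have "limitin (product_topology (\<lambda>_. euclidean) UNIV) f l F"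
    unfolding limitin_componentwise
  proof (intro conjI)
    show "l \<in> extensional UNIV" by simp
    show "\<forall>\<^sub>F a in F. f a \<in> topspace (product_topology (\<lambda>_. euclidean) UNIV)" by simp
    show "\<forall>i\<in>UNIV. limitin euclidean (\<lambda>c. f c i) (l i) F" using assms by simp
  qed
  then show ?thesis by (simp add: euclidean_product_topology)
qed

lemma sq_convex:
  fixes a b t :: real
  assumes "0 \<le> t" "t \<le> 1"
  shows "(t * a + (1 - t) * b)\<^sup>2 \<le> t * a\<^sup>2 + (1 - t) * b\<^sup>2"
proof -
  have "t * a\<^sup>2 + (1 - t) * b\<^sup>2 - (t * a + (1 - t) * b)\<^sup>2 = t * (1 - t) * (a - b)\<^sup>2"
    by (simp add: power2_eq_square algebra_simps)
  moreover have "t * (1 - t) * (a - b)\<^sup>2 \<ge> 0" using assms by simp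
  ultimately show ?thesis by linarith
qed

context constr begin

lemma B_convex:
  assumes x: "x \<in> Bset" and y: "y \<in> Bset" and t: "0 \<le> t" "t \<le> 1"
  shows "(\<lambda>n. t * x n + (1 - t) * y n) \<in> Bset"
proof -
  have nn: "\<forall>j<m. 0 \<le> t * x j + (1 - t) * y j" using x y t by (simp add: Bset_def)
  have s: "(\<Sum>j<m. t * x j + (1 - t) * y j) = 1"
    using x y by (simp add: Bset_def sum.distrib sum_distrib_left[symmetric])
  have q: "(\<Sum>n<N. (t * x n + (1 - t) * y n)\<^sup>2) \<le> 1" for N
  proof -
    have "(\<Sum>n<N. (t * x n + (1 - t) * y n)\<^sup>2) \<le> (\<Sum>n<N. t * (x n)\<^sup>2 + (1 - t) * (y n)\<^sup>2)"
      by (rule sum_mono) (rule sq_convex[OF t])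
    also have "\<dots> = t * (\<Sum>n<N. (x n)\<^sup>2) + (1 - t) * (\<Sum>n<N. (y n)\<^sup>2)"
      by (simp add: sum.distrib sum_distrib_left)
    also have "\<dots> \<le> t * 1 + (1 - t) * 1"
      using x y t unfolding Bset_def by (intro add_mono mult_left_mono) auto
    finally show ?thesis by simp
  qed
  show ?thesis using nn s q by (simp add: Bset_def)
qed

lemma L_convex:
  fixes t :: real
  assumes x: "x \<in> Bset" and y: "y \<in> Bset"
  shows "L (\<lambda>n. t * x n + (1 - t) * y n) = (\<lambda>A. of_real t * L x A + of_real (1 - t) * L y A)"
proof
  fix A
  have s: "(\<Sum>n. of_real ((t * x n + (1 - t) * y n) * e n) * \<tau> n A) =
      of_real t * (\<Sum>n. of_real (x n * e n) * \<tau> n A) + of_real (1 - t) * (\<Sum>n. of_real (y n * e n) * \<tau> n A)"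
  proof -
    have "(\<Sum>n. of_real ((t * x n + (1 - t) * y n) * e n) * \<tau> n A) =
        (\<Sum>n. of_real t * (of_real (x n * e n) * \<tau> n A) + of_real (1 - t) * (of_real (y n * e n) * \<tau> n A))"
      by (simp add: algebra_simps)
    also have "\<dots> = (\<Sum>n. of_real t * (of_real (x n * e n) * \<tau> n A)) + (\<Sum>n. of_real (1 - t) * (of_real (y n * e n) * \<tau> n A))"
      by (rule suminf_add[symmetric]) (intro summable_mult summ_term x y)+
    also have "\<dots> = of_real t * (\<Sum>n. of_real (x n * e n) * \<tau> n A) + of_real (1 - t) * (\<Sum>n. of_real (y n * e n) * \<tau> n A)"
      by (simp only: suminf_mult[OF summ_term[OF x]] suminf_mult[OF summ_term[OF y]])
    finally show ?thesis .
  qed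
  have f: "(\<Sum>j<m. of_real ((1 - \<theta>) * (t * x j + (1 - t) * y j)) * p j A) =
      of_real t * (\<Sum>j<m. of_real ((1 - \<theta>) * x j) * p j A) + of_real (1 - t) * (\<Sum>j<m. of_real ((1 - \<theta>) * y j) * p j A)"
    by (simp add: sum_distrib_left sum.distrib[symmetric] algebra_simps)
  show "L (\<lambda>n. t * x n + (1 - t) * y n) A = of_real t * L x A + of_real (1 - t) * L y A"
    unfolding L_def s f by (simp only: distrib_left add_ac)
qed

definition G where "G = L ` Bset"

lemma G_fconvex: "fconvex G"
  unfolding fconvex_def G_def
proof (intro ballI allI impI)
  fix a b and t :: real assume a: "a \<in> L ` Bset" and b: "b \<in> L ` Bset" and t: "0 \<le> t \<and> t \<le> 1"
  obtain x y where xy: "x \<in> Bset" "y \<in> Bset" "a = L x" "b = L y" using a b by blast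
  have "(\<lambda>A. of_real t * a A + of_real (1 - t) * b A) = L (\<lambda>n. t * x n + (1 - t) * y n)"
    using L_convex[OF xy(1,2)] xy(3,4) by simp
  then show "(\<lambda>A. of_real t * a A + of_real (1 - t) * b A) \<in> L ` Bset"
    using B_convex[OF xy(1,2)] t by auto
qed

definition e0 :: "nat \<Rightarrow> real" where "e0 = (\<lambda>n. if n = 0 then 1 else 0)"

lemma e0_B: "e0 \<in> Bset"
proof -
  have "(\<Sum>n<N. (e0 n)\<^sup>2) \<le> 1" for N
  proof -
    have "(\<Sum>n<N. (e0 n)\<^sup>2) = (\<Sum>n<N. if n = 0 then 1 else 0)"
      by (intro sum.cong) (auto simp: e0_def)
    also have "\<dots> \<le> 1" by (simp add: sum.delta)
    finally show ?thesis .
  qed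
  moreover have "(\<Sum>j<m. e0 j) = 1" using m by (simp add: e0_def sum.delta)
  ultimately show ?thesis by (simp add: Bset_def e0_def)
qed

lemma B_compact: "compact Bset"
proof -
  define Q :: "(nat \<Rightarrow> real) set" where "Q = PiE UNIV (\<lambda>_. {-1..1})"
  have "compactin (product_topology (\<lambda>_. euclidean) UNIV) Q"
    unfolding Q_def compactin_PiE by auto
  then have cQ: "compact Q" by (simp add: euclidean_product_topology)
  have BQ: "Bset \<subseteq> Q" using B_bound by (auto simp: Q_def PiE_def abs_le_iff)
  have c1: "closed {x::nat \<Rightarrow> real. \<forall>j<m. 0 \<le> x j}"
  proof -
    have "{x::nat \<Rightarrow> real. \<forall>j<m. 0 \<le> x j} = (\<Inter>j\<in>{..<m}. {x. 0 \<le> x j})" by auto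
    moreover have "closed {x::nat \<Rightarrow> real. 0 \<le> x j}" for j
      by (rule closed_Collect_le) (auto intro: continuous_intros coord_cont)
    ultimately show ?thesis by auto
  qed
  have c2: "closed {x::nat \<Rightarrow> real. (\<Sum>j<m. x j) = 1}"
    by (rule closed_Collect_eq) (auto intro!: continuous_intros coord_cont)
  have c3: "closed {x::nat \<Rightarrow> real. \<forall>N. (\<Sum>n<N. (x n)\<^sup>2) \<le> 1}"
  proof -
    have "{x::nat \<Rightarrow> real. \<forall>N. (\<Sum>n<N. (x n)\<^sup>2) \<le> 1} = (\<Inter>N. {x. (\<Sum>n<N. (x n)\<^sup>2) \<le> 1})" by auto
    moreover have "closed {x::nat \<Rightarrow> real. (\<Sum>n<N. (x n)\<^sup>2) \<le> 1}" for N
      by (rule closed_Collect_le) (auto intro!: continuous_intros coord_cont)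
    ultimately show ?thesis by auto
  qed
  have "Bset = {x. \<forall>j<m. 0 \<le> x j} \<inter> {x. (\<Sum>j<m. x j) = 1} \<inter> {x. \<forall>N. (\<Sum>n<N. (x n)\<^sup>2) \<le> 1}"
    by (auto simp: Bset_def)
  then have "closed Bset" using c1 c2 c3 by auto
  then have "compact (Q \<inter> Bset)" using cQ by (rule compact_Int_closed[rotated])
  then show ?thesis using BQ by (simp add: Int_absorb1)
qed

lemma L_cont: "continuous_on Bset L"
proof (rule continuous_on_coordinatewise_then_product)
  fix A
  have c1: "continuous_on Bset (\<lambda>x. \<Sum>j<m. of_real ((1 - \<theta>) * x j) * p j A)"
    by (intro continuous_intros coord_cont)
  have ul: "uniform_limit Bset (\<lambda>N x. \<Sum>n<N. of_real (x n * e n) * \<tau> n A) (\<lambda>x. \<Sum>n. of_real (x n * e n) * \<tau> n A) sequentially"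
    by (rule Weierstrass_m_test[OF term_bound summ[rule_format, of A]])
  have c2: "continuous_on Bset (\<lambda>x. \<Sum>n. of_real (x n * e n) * \<tau> n A)"
  proof (rule uniform_limit_theorem[OF _ ul])
    show "\<forall>\<^sub>F N in sequentially. continuous_on Bset (\<lambda>x. \<Sum>n<N. of_real (x n * e n) * \<tau> n A)"
      by (intro always_eventually allI continuous_intros coord_cont)
  qed simp
  show "continuous_on Bset (\<lambda>x. L x A)" unfolding L_def by (rule continuous_on_add[OF c1 c2])
qed

lemma G_compact: "compact G"
  unfolding G_def by (rule compact_continuous_image[OF L_cont B_compact])

lemma G_polar: "G \<subseteq> polar sm U"
  unfolding G_def using L_polar by blast

lemma G_closedin: "closedin (weakstar sm) G"
proof -
  have "G \<subseteq> tdual sm" using G_polar by (auto simp: polar_def)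
  moreover have "closed G"
  proof -
    have H: "Hausdorff_space (euclidean :: ('a \<Rightarrow> 'k) topology)"
      using Hausdorff_space_product_topology[of "\<lambda>_::'a. (euclidean::'k topology)" UNIV]
      by (simp add: euclidean_product_topology)
    have "compactin euclidean G" using G_compact by simp
    then have "closedin euclidean G" by (rule compactin_imp_closedin[OF H])
    then show ?thesis by simp
  qed
  ultimately show ?thesis unfolding weakstar_def closedin_subtopology
    by (intro exI[of _ G]) auto
qed

lemma G_CU: "G \<in> CU sm U"
  using G_fconvex G_closedin G_polar e0_B by (auto simp: CU_def G_def)

end


lemma key_ineq:
  fixes y z :: "nat \<Rightarrow> real"
  assumes z: "\<forall>M. (\<Sum>k<M. (z k)\<^sup>2) \<le> 1" and y1: "(\<Sum>k<Suc N. (y k)\<^sup>2) = 1"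
    and y0: "\<forall>k>N. y k = 0" and ne: "z \<noteq> y"
  shows "(\<Sum>k<Suc N. y k * z k) < 1"
proof -
  obtain i where i: "z i \<noteq> y i" using ne by auto
  define M where "M = max (Suc N) (Suc i)"
  have iM: "i < M" and NM: "Suc N \<le> M" by (auto simp: M_def)
  have "0 < (z i - y i)\<^sup>2" using i by simp
  also have "\<dots> \<le> (\<Sum>k<M. (z k - y k)\<^sup>2)"
    by (rule member_le_sum) (use iM in auto)
  also have "\<dots> = (\<Sum>k<M. (z k)\<^sup>2) - 2 * (\<Sum>k<M. y k * z k) + (\<Sum>k<M. (y k)\<^sup>2)"
    by (simp add: power2_diff sum.distrib sum_subtractf sum_distrib_left algebra_simps)
  also have "(\<Sum>k<M. y k * z k) = (\<Sum>k<Suc N. y k * z k)"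
    by (rule sum.mono_neutral_right) (use NM y0 in auto)
  also have "(\<Sum>k<M. (y k)\<^sup>2) = (\<Sum>k<Suc N. (y k)\<^sup>2)"
    by (rule sum.mono_neutral_right) (use NM y0 in auto)
  finally have "0 < (\<Sum>k<M. (z k)\<^sup>2) - 2 * (\<Sum>k<Suc N. y k * z k) + 1" using y1 by simp
  then show ?thesis using z[rule_format, of M] by linarith
qed

context constr begin

definition approx :: "(nat \<Rightarrow> real) \<Rightarrow> nat \<Rightarrow> nat \<Rightarrow> real" where
  "approx x N = (\<lambda>k. if k < N then x k else if k = N then sqrt (1 - (\<Sum>n<N. (x n)\<^sup>2)) else 0)"

lemma approx_sq:
  assumes x: "x \<in> Bset"
  shows "(\<Sum>k<Suc N. (approx x N k)\<^sup>2) = 1"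
proof -
  have le: "(\<Sum>n<N. (x n)\<^sup>2) \<le> 1" using x by (simp add: Bset_def)
  have "(\<Sum>k<Suc N. (approx x N k)\<^sup>2) = (\<Sum>k<N. (approx x N k)\<^sup>2) + (approx x N N)\<^sup>2" by simp
  also have "(\<Sum>k<N. (approx x N k)\<^sup>2) = (\<Sum>k<N. (x k)\<^sup>2)" by (intro sum.cong) (auto simp: approx_def)
  also have "(approx x N N)\<^sup>2 = 1 - (\<Sum>n<N. (x n)\<^sup>2)" using le by (simp add: approx_def)
  finally show ?thesis by simp
qed

lemma approx_zero: "\<forall>k>N. approx x N k = 0"
  by (simp add: approx_def)

lemma approx_B:
  assumes x: "x \<in> Bset" and N: "m \<le> N"
  shows "approx x N \<in> Bset"
proof -
  have eq: "approx x N j = x j" if "j < m" for j using that N by (simp add: approx_def)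
  have "\<forall>j<m. 0 \<le> approx x N j" using x eq by (simp add: Bset_def)
  moreover have "(\<Sum>j<m. approx x N j) = 1" using x eq by (simp add: Bset_def)
  moreover have "(\<Sum>n<M. (approx x N n)\<^sup>2) \<le> 1" for M
  proof -
    have "(\<Sum>n<M. (approx x N n)\<^sup>2) \<le> (\<Sum>n<max M (Suc N). (approx x N n)\<^sup>2)"
      by (rule sum_mono2) auto
    also have "\<dots> = (\<Sum>n<Suc N. (approx x N n)\<^sup>2)"
      by (rule sum.mono_neutral_right) (auto simp: approx_def)
    also have "\<dots> = 1" by (rule approx_sq[OF x])
    finally show ?thesis .
  qed
  ultimately show ?thesis by (simp add: Bset_def)
qed

lemma approx_tendsto: "(\<lambda>N. approx x N) \<longlonglongrightarrow> x"
proof (rule tendsto_coord)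
  fix i
  show "(\<lambda>N. approx x N i) \<longlonglongrightarrow> x i"
    by (rule tendsto_eventually) (auto simp: eventually_sequentially approx_def intro!: exI[of _ "Suc i"])
qed

lemma exposed:
  fixes re :: "'k \<Rightarrow> real"
  assumes re_add: "\<And>a b. re (a + b) = re a + re b" and re_mult: "\<And>r a. re (of_real r * a) = r * re a"
    and re_one: "re 1 = 1"
    and x: "x \<in> Bset" and N: "m \<le> N"
  shows "L (approx x N) \<in> exposed_pts re G"
proof -
  define y where "y = approx x N"
  have yB: "y \<in> Bset" using approx_B[OF x N] by (simp add: y_def)
  define Af where "Af = (\<Sum>k<Suc N. sm (of_real (y k / e k)) (D k))"
  have re_of_real: "re (of_real r) = r" for r using re_mult[of r 1] re_one by simp
  have re_sum: "re (\<Sum>k\<in>F. f k) = (\<Sum>k\<in>F. re (f k))" for F and f :: "nat \<Rightarrow> 'k"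
  proof (induction F rule: infinite_finite_induct)
    case (infinite F) then show ?case using re_of_real[of 0] by simp
  next
    case empty then show ?case using re_of_real[of 0] by simp
  next
    case (insert a F) then show ?case by (simp add: re_add)
  qed
  have val: "re (L z Af) = (\<Sum>k<Suc N. y k * z k)" if z: "z \<in> Bset" for z
  proof -
    have "L z Af = (\<Sum>k<Suc N. of_real (y k / e k) * L z (D k))"
      unfolding Af_def lin_sumx[OF L_lin[OF z]] lin_sm[OF L_lin[OF z]] by (rule refl)
    also have "\<dots> = (\<Sum>k<Suc N. of_real (y k * z k))"
    proof (rule sum.cong)
      fix k
      have "e k \<noteq> 0" using epos by (metis less_irrefl)
      then have "y k / e k * (z k * e k) = y k * z k" by (simp add: field_simps)
      then show "of_real (y k / e k) * L z (D k) = (of_real (y k * z k) :: 'k)"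
        using L_D[OF z] by (metis of_real_mult)
    qed simp
    finally show ?thesis by (simp only: re_sum re_of_real)
  qed
  have one: "(\<Sum>k<Suc N. y k * y k) = 1" using approx_sq[OF x, of N] by (simp add: y_def power2_eq_square)
  show ?thesis unfolding exposed_pts_def
  proof (intro CollectI conjI exI[of _ Af] ballI impI)
    show "L (approx x N) \<in> G" using yB by (simp add: G_def y_def)
  next
    fix \<sigma> assume s: "\<sigma> \<in> G" and ne: "\<sigma> \<noteq> L (approx x N)"
    obtain z where z: "z \<in> Bset" "\<sigma> = L z" using s by (auto simp: G_def)
    have "z \<noteq> y" using ne z by (auto simp: y_def)
    moreover have "\<forall>M. (\<Sum>k<M. (z k)\<^sup>2) \<le> 1" using z by (simp add: Bset_def)
    ultimately have "(\<Sum>k<Suc N. y k * z k) < 1"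
      using key_ineq[where z=z and y=y and N=N] approx_sq[OF x, of N] approx_zero[of N x] by (simp add: y_def)
    then show "re (\<sigma> Af) < re (L (approx x N) Af)"
      using val[OF z(1)] val[OF yB] one z(2) by (simp add: y_def)
  qed
qed

lemma G_D0U:
  fixes re :: "'k \<Rightarrow> real"
  assumes re_add: "\<And>a b. re (a + b) = re a + re b" and re_mult: "\<And>r a. re (of_real r * a) = r * re a"
    and re_one: "re 1 = 1"
  shows "G \<in> D0U sm re U"
proof -
  define E where "E = exposed_pts re G"
  have EG: "E \<subseteq> G" by (auto simp: E_def exposed_pts_def)
  have Gt: "G \<subseteq> tdual sm" using G_polar by (auto simp: polar_def)
  have sub1: "weakstar sm closure_of E \<subseteq> G" by (rule closure_of_minimal[OF EG G_closedin])
  have sub2: "G \<subseteq> weakstar sm closure_of E"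
  proof
    fix \<sigma> assume s: "\<sigma> \<in> G"
    then obtain x where x: "x \<in> Bset" "\<sigma> = L x" by (auto simp: G_def)
    have lim: "(\<lambda>N. L (approx x N)) \<longlonglongrightarrow> L x"
    proof (rule continuous_on_tendsto_compose[OF L_cont approx_tendsto x(1)])
      show "\<forall>\<^sub>F N in sequentially. approx x N \<in> Bset"
        using approx_B[OF x(1)] by (auto simp: eventually_sequentially)
    qed
    have "L x \<in> closure E"
    proof (rule Lim_in_closed_set[OF closed_closure _ _ lim])
      show "\<forall>\<^sub>F N in sequentially. L (approx x N) \<in> closure E"
        using exposed[OF re_add re_mult re_one x(1)] closure_subset
        by (auto simp: eventually_sequentially E_def)
    qed simp
    moreover have "tdual sm \<inter> E = E" using EG Gt by blast
    ultimately show "\<sigma> \<in> weakstar sm closure_of E"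
      using s Gt x(2) unfolding weakstar_def closure_of_subtopology by auto
  qed
  show ?thesis using G_CU sub1 sub2 by (auto simp: D0U_def E_def)
qed

end


lemma convex_comb:
  fixes C :: "('a \<Rightarrow> 'k::real_normed_field) set" and m :: nat and x :: "nat \<Rightarrow> real"
    and p :: "nat \<Rightarrow> 'a \<Rightarrow> 'k"
  assumes C: "fconvex C"
  shows "(\<forall>j<m. p j \<in> C) \<longrightarrow> (\<forall>j<m. 0 \<le> x j) \<longrightarrow> (\<Sum>j<m. x j) = 1 \<longrightarrow>
         (\<lambda>A. \<Sum>j<m. of_real (x j) * p j A) \<in> C"
proof (induction m arbitrary: x)
  case 0
  then show ?case by simp
next
  case (Suc m)
  show ?case
  proof (intro impI)
    assume p: "\<forall>j<Suc m. p j \<in> C" and nn: "\<forall>j<Suc m. 0 \<le> x j" and s1: "(\<Sum>j<Suc m. x j) = 1"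
    define s where "s = (\<Sum>j<m. x j)"
    have s0: "0 \<le> s" using nn by (auto simp: s_def intro: sum_nonneg)
    have sx: "s + x m = 1" using s1 by (simp add: s_def)
    show "(\<lambda>A. \<Sum>j<Suc m. of_real (x j) * p j A) \<in> C"
    proof (cases "s = 0")
      case True
      then have xm: "x m = 1" using sx by simp
      have "\<forall>j<m. x j = 0" using True nn unfolding s_def
        by (subst (asm) sum_nonneg_eq_0_iff) auto
      then have "(\<lambda>A. \<Sum>j<Suc m. of_real (x j) * p j A) = p m" using xm by (auto simp: fun_eq_iff)
      then show ?thesis using p by simp
    next
      case False
      then have spos: "s > 0" using s0 by simp
      define x' where "x' = (\<lambda>j. x j / s)"
      have qC: "(\<lambda>A. \<Sum>j<m. of_real (x' j) * p j A) \<in> C"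
        using Suc.IH[of x'] p nn spos
        by (simp add: x'_def sum_divide_distrib[symmetric] s_def[symmetric])
      have pm: "p m \<in> C" using p by simp
      have xm0: "0 \<le> x m" using nn by simp
      have st: "0 \<le> s \<and> s \<le> 1" using s0 sx xm0 by linarith
      have "(\<lambda>A. of_real s * (\<Sum>j<m. of_real (x' j) * p j A) + of_real (1 - s) * p m A) \<in> C"
        using C[unfolded fconvex_def, rule_format, OF qC pm st] .
      moreover have "(\<lambda>A. of_real s * (\<Sum>j<m. of_real (x' j) * p j A) + of_real (1 - s) * p m A) =
          (\<lambda>A. \<Sum>j<Suc m. of_real (x j) * p j A)"
      proof
        fix A
        have "of_real s * (\<Sum>j<m. of_real (x' j) * p j A) = (\<Sum>j<m. of_real (x j) * p j A)"
          unfolding sum_distrib_left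
        proof (rule sum.cong)
          fix j
          have "s * x' j = x j" using spos by (simp add: x'_def)
          then show "of_real s * (of_real (x' j) * p j A) = of_real (x j) * p j A"
            by (metis mult.assoc of_real_mult)
        qed simp
        moreover have "1 - s = x m" using sx by simp
        ultimately show "of_real s * (\<Sum>j<m. of_real (x' j) * p j A) + of_real (1 - s) * p m A =
          (\<Sum>j<Suc m. of_real (x j) * p j A)" by simp
      qed
      ultimately show ?thesis by simp
    qed
  qed
qed

context constr begin

lemma hdist_G:
  assumes C: "fconvex C" and pC: "\<forall>j<m. p j \<in> C"
    and R: "\<forall>\<sigma>\<in>C. norm (\<sigma> A) \<le> R"
    and net: "\<forall>\<rho>\<in>C. \<exists>j<m. norm (\<rho> A - p j A) \<le> \<eta>"
    and small: "\<theta> * R + (\<Sum>n. e n * norm (\<tau> n A)) + \<eta> < \<epsilon>"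
  shows "hdist A C G < ereal \<epsilon>"
proof -
  define S where "S = (\<Sum>n. e n * norm (\<tau> n A))"
  define \<delta> where "\<delta> = \<theta> * R + S + \<eta>"
  have eta0: "0 \<le> \<eta>"
  proof -
    have "p 0 \<in> C" using pC m by simp
    then obtain j where "norm (p 0 A - p j A) \<le> \<eta>" using net by blast
    then show ?thesis using norm_ge_zero order_trans by blast
  qed
  have S0: "0 \<le> S" unfolding S_def using summ epos by (intro suminf_nonneg) (auto simp: less_imp_le)
  have d1: "(INF \<tau>'\<in>G. ereal (norm (\<sigma> A - \<tau>' A))) \<le> ereal \<delta>" if s: "\<sigma> \<in> C" for \<sigma>
  proof -
    obtain j where j: "j < m" "norm (\<sigma> A - p j A) \<le> \<eta>" using net s by blast
    define x :: "nat \<Rightarrow> real" where "x = (\<lambda>n. if n = j then 1 else 0)"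
    have xB: "x \<in> Bset"
    proof -
      have "(\<Sum>n<N. (x n)\<^sup>2) \<le> 1" for N
      proof -
        have "(\<Sum>n<N. (x n)\<^sup>2) = (\<Sum>n<N. if n = j then 1 else 0)" by (intro sum.cong) (auto simp: x_def)
        also have "\<dots> \<le> 1" by (simp add: sum.delta)
        finally show ?thesis .
      qed
      moreover have "(\<Sum>i<m. x i) = 1" using j by (simp add: x_def sum.delta)
      ultimately show ?thesis by (simp add: Bset_def x_def)
    qed
    have "(\<Sum>i<m. of_real ((1 - \<theta>) * x i) * p i A) = (\<Sum>i<m. if i = j then of_real (1 - \<theta>) * p j A else 0)"
      by (intro sum.cong) (auto simp: x_def)
    also have "\<dots> = of_real (1 - \<theta>) * p j A" using j by (simp add: sum.delta)
    finally have "(\<Sum>i<m. of_real ((1 - \<theta>) * x i) * p i A) = of_real (1 - \<theta>) * p j A" .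
    moreover have "(\<Sum>n. of_real (x n * e n) * \<tau> n A) = of_real (e j) * \<tau> j A"
    proof -
      have "(\<lambda>n. of_real (x n * e n) * \<tau> n A) = (\<lambda>n. if n = j then of_real (e j) * \<tau> j A else 0)"
        by (auto simp: x_def)
      then show ?thesis using sums_single[of j "\<lambda>n. of_real (e j) * \<tau> j A"] by (simp add: sums_iff)
    qed
    ultimately have Lx: "L x A = of_real (1 - \<theta>) * p j A + of_real (e j) * \<tau> j A" by (simp add: L_def)
    have b1: "norm (p j A) \<le> R" using R pC j by blast
    have b2: "e j * norm (\<tau> j A) \<le> S"
    proof -
      have "(\<Sum>n\<in>{j}. e n * norm (\<tau> n A)) \<le> S"
        unfolding S_def using summ epos by (intro sum_le_suminf) (auto simp: less_imp_le)
      then show ?thesis by simp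
    qed
    have eq: "\<sigma> A - L x A = (\<sigma> A - p j A) + of_real \<theta> * p j A - of_real (e j) * \<tau> j A"
      by (simp add: Lx algebra_simps)
    have t1: "norm ((\<sigma> A - p j A) + of_real \<theta> * p j A - of_real (e j) * \<tau> j A) \<le>
        norm ((\<sigma> A - p j A) + of_real \<theta> * p j A) + norm (of_real (e j) * \<tau> j A)"
      by (rule norm_triangle_ineq4)
    have t2: "norm ((\<sigma> A - p j A) + of_real \<theta> * p j A) \<le> norm (\<sigma> A - p j A) + norm (of_real \<theta> * p j A)"
      by (rule norm_triangle_ineq)
    have "norm (\<sigma> A - L x A) \<le> norm (\<sigma> A - p j A) + norm (of_real \<theta> * p j A) + norm (of_real (e j) * \<tau> j A)"
      unfolding eq using t1 t2 by linarith
    also have "\<dots> \<le> \<eta> + \<theta> * R + S"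
      using j(2) b1 b2 \<theta> epos by (intro add_mono) (auto simp: norm_mult mult_left_mono less_imp_le)
    finally have "norm (\<sigma> A - L x A) \<le> \<delta>" by (simp add: \<delta>_def)
    then show ?thesis using xB by (intro INF_lower2[of "L x"]) (auto simp: G_def)
  qed
  have d2: "(INF \<sigma>\<in>C. ereal (norm (\<sigma> A - \<tau>' A))) \<le> ereal \<delta>" if s: "\<tau>' \<in> G" for \<tau>'
  proof -
    obtain x where x: "x \<in> Bset" "\<tau>' = L x" using s by (auto simp: G_def)
    define \<sigma> where "\<sigma> = (\<lambda>A. \<Sum>j<m. of_real (x j) * p j A)"
    have sC: "\<sigma> \<in> C" unfolding \<sigma>_def using convex_comb[OF C] pC x by (auto simp: Bset_def)
    have fs: "(\<Sum>j<m. of_real ((1 - \<theta>) * x j) * p j A) = of_real (1 - \<theta>) * \<sigma> A"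
      unfolding \<sigma>_def sum_distrib_left by (simp add: mult.assoc)
    have "L x A - \<sigma> A = - (of_real \<theta> * \<sigma> A) + (\<Sum>n. of_real (x n * e n) * \<tau> n A)"
      unfolding L_def fs by (simp add: algebra_simps)
    then have "norm (\<sigma> A - L x A) = norm (- (of_real \<theta> * \<sigma> A) + (\<Sum>n. of_real (x n * e n) * \<tau> n A))"
      by (metis norm_minus_commute)
    also have "\<dots> \<le> norm (- (of_real \<theta> * \<sigma> A)) + norm (\<Sum>n. of_real (x n * e n) * \<tau> n A)"
      by (rule norm_triangle_ineq)
    finally have "norm (\<sigma> A - L x A) \<le> norm (of_real \<theta> * \<sigma> A) + norm (\<Sum>n. of_real (x n * e n) * \<tau> n A)"
      by simp
    also have "\<dots> \<le> \<theta> * R + S"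
      using R sC \<theta> suminf_bound[OF x(1), of A] by (intro add_mono) (auto simp: norm_mult mult_left_mono S_def)
    also have "\<dots> \<le> \<delta>" unfolding \<delta>_def using eta0 by simp
    finally show ?thesis using sC x(2) by (intro INF_lower2[of \<sigma>]) auto
  qed
  have "hdist A C G \<le> ereal \<delta>"
    unfolding hdist_def using d1 d2 by (intro max.boundedI SUP_least) auto
  also have "\<dots> < ereal \<epsilon>" using small by (simp add: \<delta>_def S_def)
  finally show ?thesis .
qed

end


definition hpred :: "(('a::ab_group_add \<Rightarrow> 'k::real_normed_field) set) set \<Rightarrow> bool" where
  "hpred = (\<lambda>S. \<forall>F\<in>S. \<exists>As \<epsilon>. finite As \<and> \<epsilon> > 0 \<and> {G. \<forall>A\<in>As. hdist A F G < ereal \<epsilon>} \<subseteq> S)"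

lemma hpred_istopology: "istopology hpred"
  unfolding istopology_def
proof (intro conjI allI impI)
  fix S T :: "(('a::ab_group_add \<Rightarrow> 'k::real_normed_field) set) set"
  assume S: "hpred S" and T: "hpred T"
  show "hpred (S \<inter> T)"
    unfolding hpred_def
  proof
    fix F assume F: "F \<in> S \<inter> T"
    obtain As1 e1 where 1: "finite As1" "e1 > 0" "{G. \<forall>A\<in>As1. hdist A F G < ereal e1} \<subseteq> S"
      using S F unfolding hpred_def by blast
    obtain As2 e2 where 2: "finite As2" "e2 > 0" "{G. \<forall>A\<in>As2. hdist A F G < ereal e2} \<subseteq> T"
      using T F unfolding hpred_def by blast
    have "{G. \<forall>A\<in>As1 \<union> As2. hdist A F G < ereal (min e1 e2)} \<subseteq> S \<inter> T"
    proof
      fix G assume G: "G \<in> {G. \<forall>A\<in>As1 \<union> As2. hdist A F G < ereal (min e1 e2)}"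
      have "\<forall>A\<in>As1. hdist A F G < ereal e1"
        using G by (auto intro: order_less_le_trans)
      moreover have "\<forall>A\<in>As2. hdist A F G < ereal e2"
        using G by (auto intro: order_less_le_trans)
      ultimately show "G \<in> S \<inter> T" using 1(3) 2(3) by blast
    qed
    then show "\<exists>As \<epsilon>. finite As \<and> \<epsilon> > 0 \<and> {G. \<forall>A\<in>As. hdist A F G < ereal \<epsilon>} \<subseteq> S \<inter> T"
      using 1(1,2) 2(1,2) by (intro exI[of _ "As1 \<union> As2"] exI[of _ "min e1 e2"]) auto
  qed
next
  fix K :: "(('a::ab_group_add \<Rightarrow> 'k::real_normed_field) set) set set"
  assume K: "\<forall>S\<in>K. hpred S"
  show "hpred (\<Union>K)"
    unfolding hpred_def
  proof
    fix F assume "F \<in> \<Union>K"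
    then obtain S where S: "S \<in> K" "F \<in> S" by blast
    then obtain As e where "finite As" "e > 0" "{G. \<forall>A\<in>As. hdist A F G < ereal e} \<subseteq> S"
      using K unfolding hpred_def by blast
    then show "\<exists>As \<epsilon>. finite As \<and> \<epsilon> > 0 \<and> {G. \<forall>A\<in>As. hdist A F G < ereal \<epsilon>} \<subseteq> \<Union>K"
      using S(1) by blast
  qed
qed

lemma openin_hyper: "openin (hyper_top :: (('a::ab_group_add \<Rightarrow> 'k::real_normed_field) set) topology) = hpred"
proof -
  have "(hyper_top :: (('a \<Rightarrow> 'k) set) topology) = topology hpred" by (simp add: hyper_top_def hpred_def)
  then have "openin (hyper_top :: (('a \<Rightarrow> 'k) set) topology) = openin (topology hpred)" by (rule arg_cong)
  also have "\<dots> = hpred" by (rule topology_inverse'[OF hpred_istopology])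
  finally show ?thesis .
qed

lemma topspace_hyper: "topspace (hyper_top :: (('a::ab_group_add \<Rightarrow> 'k::real_normed_field) set) topology) = UNIV"
proof -
  have "hpred (UNIV :: (('a \<Rightarrow> 'k) set) set)" unfolding hpred_def by (auto intro!: exI[of _ "{}"] exI[of _ 1])
  then have "openin (hyper_top :: (('a \<Rightarrow> 'k) set) topology) UNIV" by (simp add: openin_hyper)
  then show ?thesis using openin_subset by blast
qed

lemma hyper_closure:
  assumes "\<And>As \<epsilon>. finite As \<Longrightarrow> \<epsilon> > 0 \<Longrightarrow> \<exists>G\<in>S. \<forall>A\<in>As. hdist A F G < ereal \<epsilon>"
  shows "F \<in> hyper_top closure_of S"
  unfolding in_closure_of topspace_hyper openin_hyper
proof (intro conjI allI impI UNIV_I)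
  fix T assume T: "F \<in> T \<and> hpred T"
  then obtain As e where "finite As" "e > 0" "{G. \<forall>A\<in>As. hdist A F G < ereal e} \<subseteq> T"
    unfolding hpred_def by blast
  then show "\<exists>y. y \<in> S \<and> y \<in> T" using assms by blast
qed

lemma finite_net:
  fixes V :: "'k::heine_borel set"
  assumes "bounded V" "\<eta> > 0"
  shows "\<exists>F. finite F \<and> F \<subseteq> V \<and> (\<forall>v\<in>V. \<exists>w\<in>F. dist v w < \<eta>)"
proof -
  have "compact (closure V)" using assms(1) by (simp add: compact_closure)
  moreover have "closure V \<subseteq> (\<Union>v\<in>V. ball v \<eta>)"
  proof
    fix x assume "x \<in> closure V"
    then obtain v where "v \<in> V" "dist v x < \<eta>" using assms(2) closure_approachable by metis
    then show "x \<in> (\<Union>v\<in>V. ball v \<eta>)" by auto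
  qed
  ultimately obtain F where F: "F \<subseteq> V" "finite F" "closure V \<subseteq> (\<Union>v\<in>F. ball v \<eta>)"
    using compactE_image[of "closure V" V "\<lambda>v. ball v \<eta>"] by blast
  have "\<forall>v\<in>V. \<exists>w\<in>F. dist v w < \<eta>"
  proof
    fix v assume "v \<in> V"
    then have "v \<in> (\<Union>w\<in>F. ball w \<eta>)" using F(3) closure_subset by blast
    then show "\<exists>w\<in>F. dist v w < \<eta>" by (auto simp: dist_commute)
  qed
  then show ?thesis using F by blast
qed



lemma exposed_sub_extreme:
  fixes re :: "'k::real_normed_field \<Rightarrow> real" and C :: "('a \<Rightarrow> 'k) set"
  assumes re_add: "\<And>a b. re (a + b) = re a + re b" and re_mult: "\<And>r a. re (of_real r * a) = r * re a"
  shows "exposed_pts re C \<subseteq> extreme_pts C"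
proof
  fix \<sigma>0 assume "\<sigma>0 \<in> exposed_pts re C"
  then obtain A where s0: "\<sigma>0 \<in> C" and A: "\<forall>\<sigma>\<in>C. \<sigma> \<noteq> \<sigma>0 \<longrightarrow> re (\<sigma> A) < re (\<sigma>0 A)"
    by (auto simp: exposed_pts_def)
  have "\<not> (\<exists>x\<in>C. \<exists>y\<in>C. \<exists>t::real. 0 < t \<and> t < 1 \<and> x \<noteq> y \<and>
       \<sigma>0 = (\<lambda>A. of_real t * x A + of_real (1 - t) * y A))"
  proof
    assume "\<exists>x\<in>C. \<exists>y\<in>C. \<exists>t::real. 0 < t \<and> t < 1 \<and> x \<noteq> y \<and>
       \<sigma>0 = (\<lambda>A. of_real t * x A + of_real (1 - t) * y A)"
    then obtain x y and t :: real where xy: "x \<in> C" "y \<in> C" "0 < t" "t < 1" "x \<noteq> y"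
      and eq: "\<sigma>0 = (\<lambda>A. of_real t * x A + of_real (1 - t) * y A)" by blast
    have r0: "re (\<sigma>0 A) = t * re (x A) + (1 - t) * re (y A)"
      unfolding eq by (simp only: re_add re_mult)
    have lx: "re (x A) \<le> re (\<sigma>0 A)" using A xy(1) by (cases "x = \<sigma>0") (auto intro: less_imp_le)
    have ly: "re (y A) \<le> re (\<sigma>0 A)" using A xy(2) by (cases "y = \<sigma>0") (auto intro: less_imp_le)
    show False
    proof (cases "x = \<sigma>0")
      case True
      then have "y \<noteq> \<sigma>0" using xy(5) by simp
      then have "re (y A) < re (\<sigma>0 A)" using A xy(2) by blast
      then have "(1 - t) * re (y A) < (1 - t) * re (\<sigma>0 A)" using xy(4) by simp
      moreover have "t * re (x A) \<le> t * re (\<sigma>0 A)" using lx xy(3) by simp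
      ultimately show False using r0 by (simp add: algebra_simps)
    next
      case False
      then have "re (x A) < re (\<sigma>0 A)" using A xy(1) by blast
      then have "t * re (x A) < t * re (\<sigma>0 A)" using xy(3) by simp
      moreover have "(1 - t) * re (y A) \<le> (1 - t) * re (\<sigma>0 A)" using ly xy(4) by simp
      ultimately show False using r0 by (simp add: algebra_simps)
    qed
  qed
  then show "\<sigma>0 \<in> extreme_pts C" using s0 by (simp add: extreme_pts_def)
qed

lemma D0U_DU:
  fixes re :: "'k::real_normed_field \<Rightarrow> real" and sm :: "'k \<Rightarrow> 'a::{ab_group_add,topological_space} \<Rightarrow> 'a"
  assumes re_add: "\<And>a b. re (a + b) = re a + re b" and re_mult: "\<And>r a. re (of_real r * a) = r * re a"
  shows "D0U sm re U \<subseteq> DU sm U"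
proof
  fix C assume "C \<in> D0U sm re U"
  then have C: "C \<in> CU sm U" and eq: "C = weakstar sm closure_of exposed_pts re C" by (auto simp: D0U_def)
  have cl: "closedin (weakstar sm) C" using C by (simp add: CU_def)
  have "exposed_pts re C \<subseteq> extreme_pts C" by (rule exposed_sub_extreme[OF re_add re_mult])
  then have "weakstar sm closure_of exposed_pts re C \<subseteq> weakstar sm closure_of extreme_pts C"
    by (rule closure_of_mono)
  moreover have "weakstar sm closure_of extreme_pts C \<subseteq> C"
    by (rule closure_of_minimal[OF _ cl]) (auto simp: extreme_pts_def)
  ultimately have "C = weakstar sm closure_of extreme_pts C" using eq by blast
  then show "C \<in> DU sm U" using C by (simp add: DU_def)
qed



lemma density:
  fixes sm :: "'k::{real_normed_field,banach,heine_borel} \<Rightarrow> 'a::{ab_group_add,t2_space} \<Rightarrow> 'a"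
    and re :: "'k \<Rightarrow> real" and U :: "'a set"
  assumes tvs: "tvs sm" and U0: "0 \<in> interior U"
    and sig: "\<exists>\<sigma>::nat \<Rightarrow> 'a \<Rightarrow> 'k. (\<forall>n. \<sigma> n \<in> tdual sm) \<and> lin_indep_seq \<sigma> \<and>
        (\<forall>n. bdd_above ((\<lambda>A. norm (\<sigma> n A)) ` U))"
    and re_add: "\<And>a b. re (a + b) = re a + re b" and re_mult: "\<And>r a. re (of_real r * a) = r * re a"
    and re_one: "re 1 = 1"
  shows "CU sm U \<subseteq> hyper_top closure_of D0U sm re U"
proof
  fix C assume C: "C \<in> CU sm U"
  obtain \<sigma> :: "nat \<Rightarrow> 'a \<Rightarrow> 'k" where \<sigma>: "\<forall>n. \<sigma> n \<in> tdual sm" "lin_indep_seq \<sigma>"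
    "\<forall>n. bdd_above ((\<lambda>A. norm (\<sigma> n A)) ` U)" using sig by blast
  have Cpol: "C \<subseteq> polar sm U" and Cconv: "fconvex C" and Cne: "C \<noteq> {}" using C by (auto simp: CU_def)
  have "\<forall>A. \<exists>r>0. \<forall>\<phi> M. lin sm \<phi> \<longrightarrow> (\<forall>B\<in>U. norm (\<phi> B) \<le> M) \<longrightarrow> norm (\<phi> A) \<le> r * M"
    by (intro allI) (rule absorb[OF tvs U0])
  then have "\<exists>r. \<forall>A. r A > 0 \<and> (\<forall>\<phi> M. lin sm \<phi> \<longrightarrow> (\<forall>B\<in>U. norm (\<phi> B) \<le> M) \<longrightarrow> norm (\<phi> A) \<le> r A * M)"
    by (rule choice)
  then obtain r where r0: "\<forall>A. r A > 0 \<and> (\<forall>\<phi> M. lin sm \<phi> \<longrightarrow> (\<forall>B\<in>U. norm (\<phi> B) \<le> M) \<longrightarrow> norm (\<phi> A) \<le> r A * M)"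
    by blast
  have r: "\<And>A. r A > 0"
    "\<And>A \<phi> M. lin sm \<phi> \<Longrightarrow> (\<forall>B\<in>U. norm (\<phi> B) \<le> M) \<Longrightarrow> norm (\<phi> A) \<le> r A * M"
    using r0 by blast+
  have Cb: "norm (\<rho> A) \<le> r A" if "\<rho> \<in> C" for \<rho> A
  proof -
    have "\<rho> \<in> polar sm U" using that Cpol by blast
    then have "lin sm \<rho>" "\<forall>B\<in>U. norm (\<rho> B) \<le> 1" unfolding polar_def using tdual_lin by blast+
    then show ?thesis using r(2)[of \<rho> 1 A] by simp
  qed
  show "C \<in> hyper_top closure_of D0U sm re U"
  proof (rule hyper_closure)
    fix As :: "'a set" and \<epsilon> :: real assume As: "finite As" and eps: "\<epsilon> > 0"
    define R where "R = 1 + (\<Sum>A\<in>As. r A)"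
    have rR: "r A \<le> R" if "A \<in> As" for A
    proof -
      have "r A \<le> (\<Sum>A\<in>As. r A)" using As that r(1) by (intro member_le_sum) (auto simp: less_imp_le)
      then show ?thesis by (simp add: R_def)
    qed
    have R0: "R > 0" unfolding R_def using r(1) by (simp add: add_pos_nonneg sum_nonneg less_imp_le)
    define \<eta> where "\<eta> = \<epsilon> / 4"
    have eta: "\<eta> > 0" using eps by (simp add: \<eta>_def)
    have netA: "\<exists>Q. finite Q \<and> Q \<subseteq> C \<and> (\<forall>\<rho>\<in>C. \<exists>q\<in>Q. norm (\<rho> A - q A) \<le> \<eta>)" for A
    proof -
      have "bounded ((\<lambda>\<rho>. \<rho> A) ` C)" unfolding bounded_iff
        by (intro exI[of _ "r A"]) (auto intro: Cb)
      from finite_net[OF this eta] obtain F where F: "finite F" "F \<subseteq> (\<lambda>\<rho>. \<rho> A) ` C" "\<forall>v\<in>(\<lambda>\<rho>. \<rho> A) ` C. \<exists>w\<in>F. dist v w < \<eta>"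
        by blast
      obtain Q where Q: "Q \<subseteq> C" "finite Q" "F = (\<lambda>\<rho>. \<rho> A) ` Q"
        using finite_subset_image[OF F(1,2)] by blast
      have "\<forall>\<rho>\<in>C. \<exists>q\<in>Q. norm (\<rho> A - q A) \<le> \<eta>"
      proof
        fix \<rho> assume "\<rho> \<in> C"
        then obtain w where "w \<in> F" "dist (\<rho> A) w < \<eta>" using F(3) by blast
        then show "\<exists>q\<in>Q. norm (\<rho> A - q A) \<le> \<eta>" using Q(3) by (auto simp: dist_norm intro: less_imp_le)
      qed
      then show ?thesis using Q by blast
    qed
    then have "\<forall>A. \<exists>Q. finite Q \<and> Q \<subseteq> C \<and> (\<forall>\<rho>\<in>C. \<exists>q\<in>Q. norm (\<rho> A - q A) \<le> \<eta>)" by (rule allI)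
    then have "\<exists>Q. \<forall>A. finite (Q A) \<and> Q A \<subseteq> C \<and> (\<forall>\<rho>\<in>C. \<exists>q\<in>Q A. norm (\<rho> A - q A) \<le> \<eta>)" by (rule choice)
    then obtain Q where Q0: "\<forall>A. finite (Q A) \<and> Q A \<subseteq> C \<and> (\<forall>\<rho>\<in>C. \<exists>q\<in>Q A. norm (\<rho> A - q A) \<le> \<eta>)" by blast
    have Q: "\<And>A. finite (Q A)" "\<And>A. Q A \<subseteq> C" "\<And>A. \<forall>\<rho>\<in>C. \<exists>q\<in>Q A. norm (\<rho> A - q A) \<le> \<eta>"
      using Q0 by blast+
    obtain c0 where c0: "c0 \<in> C" using Cne by blast
    define P where "P = insert c0 (\<Union>A\<in>As. Q A)"
    have Pfin: "finite P" using As Q(1) by (simp add: P_def)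
    have PC: "P \<subseteq> C" using c0 Q(2) by (auto simp: P_def)
    obtain m :: nat and p where mp: "P = p ` {i. i < m}" using finite_imp_nat_seg_image_inj_on[OF Pfin] by blast
    have Pm: "P = p ` {..<m}" using mp by (simp add: lessThan_def)
    have m: "m > 0" using Pm by (cases m) (auto simp: P_def)
    have Plb: "\<forall>\<phi>\<in>P. lin sm \<phi> \<and> bddU U \<phi>"
    proof
      fix \<phi> assume "\<phi> \<in> P"
      then have "\<phi> \<in> polar sm U" using PC Cpol by blast
      then show "lin sm \<phi> \<and> bddU U \<phi>" by (auto simp: polar_def tdual_lin bddU_def)
    qed
    have \<sigma>lb: "\<forall>n. lin sm (\<sigma> n) \<and> bddU U (\<sigma> n)"
    proof
      fix n
      have "lin sm (\<sigma> n)" using \<sigma>(1) tdual_lin by blast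
      moreover have "bddU U (\<sigma> n)" using \<sigma>(3) unfolding bddU_def bdd_above_def by blast
      ultimately show "lin sm (\<sigma> n) \<and> bddU U (\<sigma> n)" ..
    qed
    obtain \<tau> :: "nat \<Rightarrow> 'a \<Rightarrow> 'k" and D :: "nat \<Rightarrow> 'a" where \<tau>D: "\<forall>n. lin sm (\<tau> n) \<and> bddU U (\<tau> n)" "\<forall>n. \<forall>\<phi>\<in>P. \<phi> (D n) = 0"
      "\<forall>n k. \<tau> n (D k) = (if n = k then 1 else 0)"
      using biorth[OF Pfin Plb \<sigma>(2) \<sigma>lb] by blast
    have "\<forall>n::nat. \<exists>M::real. 0 \<le> M \<and> (\<forall>A\<in>U. norm (\<tau> n A) \<le> M)"
    proof
      fix n
      obtain M where "\<forall>A\<in>U. norm (\<tau> n A) \<le> M" using \<tau>D(1) unfolding bddU_def by blast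
      then show "\<exists>M. 0 \<le> M \<and> (\<forall>A\<in>U. norm (\<tau> n A) \<le> M)"
        by (intro exI[of _ "max M 0"]) auto
    qed
    then obtain Mt :: "nat \<Rightarrow> real" where Mt: "\<And>n. 0 \<le> Mt n" "\<And>n A. A \<in> U \<Longrightarrow> norm (\<tau> n A) \<le> Mt n" by metis
    define \<theta> where "\<theta> = min 1 (\<epsilon> / (4 * R))"
    have th: "0 < \<theta>" "\<theta> \<le> 1" "\<theta> * R \<le> \<epsilon> / 4" using eps R0
      by (auto simp: \<theta>_def min_def field_simps)
    define e where "e n = \<theta> / (2 ^ Suc n * (Mt n + 1))" for n
    have epos: "\<forall>n. e n > 0" using th Mt(1) by (auto simp: e_def intro!: divide_pos_pos mult_pos_pos add_nonneg_pos)
    have eM: "e n * Mt n \<le> \<theta> * (1/2) ^ Suc n" for n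
    proof -
      have "e n * Mt n = \<theta> / 2 ^ Suc n * (Mt n / (Mt n + 1))"
        using Mt(1)[of n] by (simp add: e_def field_simps)
      also have "\<dots> \<le> \<theta> / 2 ^ Suc n * 1"
        using Mt(1)[of n] th(1) by (intro mult_left_mono) (auto simp: field_simps)
      finally show ?thesis by (simp add: power_one_over)
    qed
    have geo: "(\<lambda>n. c * (\<theta> * (1/2) ^ Suc n)) sums (c * \<theta>)" for c
      using sums_mult[OF sums_mult[OF power_half_series, of \<theta>], of c] by simp
    have tb: "e n * norm (\<tau> n A) \<le> r A * (\<theta> * (1/2) ^ Suc n)" for n A
    proof -
      have "norm (\<tau> n A) \<le> r A * Mt n" using r(2)[of "\<tau> n" "Mt n" A] \<tau>D(1) Mt(2) by blast
      then have "e n * norm (\<tau> n A) \<le> e n * (r A * Mt n)" using epos by (intro mult_left_mono) (auto simp: less_imp_le)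
      also have "\<dots> = r A * (e n * Mt n)" by simp
      also have "\<dots> \<le> r A * (\<theta> * (1/2) ^ Suc n)" using eM r(1)[of A] by (intro mult_left_mono) (auto simp: less_imp_le)
      finally show ?thesis .
    qed
    have summ: "\<forall>A. summable (\<lambda>n. e n * norm (\<tau> n A))"
    proof
      fix A
      show "summable (\<lambda>n. e n * norm (\<tau> n A))"
        by (rule summable_comparison_test'[OF sums_summable[OF geo[of "r A"]], where N=0])
          (use tb epos in \<open>auto simp: less_imp_le\<close>)
    qed
    have Sb: "(\<Sum>n. e n * norm (\<tau> n A)) \<le> r A * \<theta>" for A
      using suminf_le[OF tb summ[rule_format, of A] sums_summable[OF geo[of "r A"]]] sums_unique[OF geo[of "r A"]]
      by simp
    have polarb: "\<forall>A\<in>U. (\<Sum>n. e n * norm (\<tau> n A)) \<le> \<theta>"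
    proof
      fix A assume A: "A \<in> U"
      have "e n * norm (\<tau> n A) \<le> 1 * (\<theta> * (1/2) ^ Suc n)" for n
        using Mt(2)[OF A, of n] eM[of n] epos by (metis mult_left_mono less_imp_le order_trans mult_1)
      then show "(\<Sum>n. e n * norm (\<tau> n A)) \<le> \<theta>"
        using suminf_le[OF _ summ[rule_format, of A] sums_summable[OF geo[of 1]]] sums_unique[OF geo[of 1]]
        by simp
    qed
    have pP: "\<forall>j<m. p j \<in> P" using Pm by auto
    interpret cs: constr sm U m p \<tau> D e \<theta>
    proof (unfold_locales)
      show "tvs sm" by (rule tvs)
      show "0 \<in> interior U" by (rule U0)
      show "m > 0" by (rule m)
      show "\<forall>j<m. lin sm (p j)" using pP Plb by blast
      show "\<forall>j<m. \<forall>A\<in>U. norm (p j A) \<le> 1" using pP PC Cpol by (auto simp: polar_def)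
      show "\<forall>n. lin sm (\<tau> n)" using \<tau>D(1) by blast
      show "\<forall>j<m. \<forall>k. p j (D k) = 0" using pP \<tau>D(2) by blast
      show "\<forall>n k. \<tau> n (D k) = (if n = k then 1 else 0)" by (rule \<tau>D(3))
      show "\<forall>n. e n > 0" by (rule epos)
      show "\<forall>A. summable (\<lambda>n. e n * norm (\<tau> n A))" by (rule summ)
      show "0 \<le> \<theta>" "\<theta> \<le> 1" using th by auto
      show "\<forall>A\<in>U. (\<Sum>n. e n * norm (\<tau> n A)) \<le> \<theta>" by (rule polarb)
    qed
    have GD: "cs.G \<in> D0U sm re U" by (rule cs.G_D0U[OF re_add re_mult re_one])
    have "\<forall>A\<in>As. hdist A C cs.G < ereal \<epsilon>"
    proof
      fix A assume A: "A \<in> As"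
      show "hdist A C cs.G < ereal \<epsilon>"
      proof (rule cs.hdist_G[OF Cconv])
        show "\<forall>j<m. p j \<in> C" using pP PC by blast
        show "\<forall>\<sigma>\<in>C. norm (\<sigma> A) \<le> r A" using Cb by blast
        show "\<forall>\<rho>\<in>C. \<exists>j<m. norm (\<rho> A - p j A) \<le> \<eta>"
        proof
          fix \<rho> assume "\<rho> \<in> C"
          then obtain q where q: "q \<in> Q A" "norm (\<rho> A - q A) \<le> \<eta>" using Q(3) by blast
          then have "q \<in> P" using A by (auto simp: P_def)
          then obtain j where "j < m" "q = p j" using Pm by auto
          then show "\<exists>j<m. norm (\<rho> A - p j A) \<le> \<eta>" using q(2) by blast
        qed
        have "\<theta> * r A \<le> \<epsilon> / 4" using rR[OF A] th by (metis mult_left_mono less_imp_le order_trans)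
        moreover have "(\<Sum>n. e n * norm (\<tau> n A)) \<le> \<epsilon> / 4" using Sb[of A] \<open>\<theta> * r A \<le> \<epsilon> / 4\<close>
          by (simp add: mult.commute)
        ultimately show "\<theta> * r A + (\<Sum>n. e n * norm (\<tau> n A)) + \<eta> < \<epsilon>"
          using eps by (simp add: \<eta>_def)
      qed
    qed
    then show "\<exists>G\<in>D0U sm re U. \<forall>A\<in>As. hdist A C G < ereal \<epsilon>" using GD by blast
  qed
qed



lemma main_generic:
  fixes sm :: "'k::{real_normed_field,banach,heine_borel} \<Rightarrow> 'a::{ab_group_add,t2_space} \<Rightarrow> 'a"
    and re :: "'k \<Rightarrow> real" and U :: "'a set"
  assumes re_add: "\<And>a b. re (a + b) = re a + re b" and re_mult: "\<And>r a. re (of_real r * a) = r * re a"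
    and re_one: "re 1 = 1"
  shows "(tvs sm \<and> separable_space (euclidean :: 'a topology) \<and>
     (\<forall>x y. x \<noteq> y \<longrightarrow> (\<exists>\<sigma>\<in>tdual sm. \<sigma> x \<noteq> \<sigma> y)) \<and>
     0 \<in> interior U \<and>
     (\<exists>\<sigma>::nat \<Rightarrow> 'a \<Rightarrow> 'k. (\<forall>n. \<sigma> n \<in> tdual sm) \<and> lin_indep_seq \<sigma> \<and>
        (\<forall>n. bdd_above ((\<lambda>A. norm (\<sigma> n A)) ` U)))
     \<longrightarrow> D0U sm re U \<subseteq> DU sm U \<and>
         CU sm U \<subseteq> hyper_top closure_of D0U sm re U \<and>
         CU sm U \<subseteq> hyper_top closure_of DU sm U)"
proof (intro impI)
  assume H: "tvs sm \<and> separable_space (euclidean :: 'a topology) \<and>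
     (\<forall>x y. x \<noteq> y \<longrightarrow> (\<exists>\<sigma>\<in>tdual sm. \<sigma> x \<noteq> \<sigma> y)) \<and>
     0 \<in> interior U \<and>
     (\<exists>\<sigma>::nat \<Rightarrow> 'a \<Rightarrow> 'k. (\<forall>n. \<sigma> n \<in> tdual sm) \<and> lin_indep_seq \<sigma> \<and>
        (\<forall>n. bdd_above ((\<lambda>A. norm (\<sigma> n A)) ` U)))"
  have 1: "D0U sm re U \<subseteq> DU sm U" by (rule D0U_DU[OF re_add re_mult])
  have 2: "CU sm U \<subseteq> hyper_top closure_of D0U sm re U"
    using H by (intro density[OF _ _ _ re_add re_mult re_one]) auto
  have 3: "hyper_top closure_of D0U sm re U \<subseteq> hyper_top closure_of DU sm U"
    by (rule closure_of_mono[OF 1])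
  show "D0U sm re U \<subseteq> DU sm U \<and> CU sm U \<subseteq> hyper_top closure_of D0U sm re U \<and>
         CU sm U \<subseteq> hyper_top closure_of DU sm U" using 1 2 3 by blast
qed

theorem theorem4p2:
  fixes smultR :: "real \<Rightarrow> 'a::{ab_group_add,t2_space} \<Rightarrow> 'a" and UR :: "'a set"
    and smultC :: "complex \<Rightarrow> 'b::{ab_group_add,t2_space} \<Rightarrow> 'b" and UC :: "'b set"
  shows
   "(tvs smultR \<and> separable_space (euclidean :: 'a topology) \<and>
     (\<forall>x y. x \<noteq> y \<longrightarrow> (\<exists>\<sigma>\<in>tdual smultR. \<sigma> x \<noteq> \<sigma> y)) \<and>
     0 \<in> interior UR \<and>
     (\<exists>\<sigma>::nat \<Rightarrow> 'a \<Rightarrow> real. (\<forall>n. \<sigma> n \<in> tdual smultR) \<and> lin_indep_seq \<sigma> \<and>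
        (\<forall>n. bdd_above ((\<lambda>A. norm (\<sigma> n A)) ` UR)))
     \<longrightarrow> D0U smultR (\<lambda>r. r) UR \<subseteq> DU smultR UR \<and>
         CU smultR UR \<subseteq> hyper_top closure_of D0U smultR (\<lambda>r. r) UR \<and>
         CU smultR UR \<subseteq> hyper_top closure_of DU smultR UR)
  \<and>
    (tvs smultC \<and> separable_space (euclidean :: 'b topology) \<and>
     (\<forall>x y. x \<noteq> y \<longrightarrow> (\<exists>\<sigma>\<in>tdual smultC. \<sigma> x \<noteq> \<sigma> y)) \<and>
     0 \<in> interior UC \<and>
     (\<exists>\<sigma>::nat \<Rightarrow> 'b \<Rightarrow> complex. (\<forall>n. \<sigma> n \<in> tdual smultC) \<and> lin_indep_seq \<sigma> \<and>
        (\<forall>n. bdd_above ((\<lambda>A. norm (\<sigma> n A)) ` UC)))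
     \<longrightarrow> D0U smultC Re UC \<subseteq> DU smultC UC \<and>
         CU smultC UC \<subseteq> hyper_top closure_of D0U smultC Re UC \<and>
         CU smultC UC \<subseteq> hyper_top closure_of DU smultC UC)"
proof (rule conjI)
  show "(tvs smultR \<and> separable_space (euclidean :: 'a topology) \<and>
     (\<forall>x y. x \<noteq> y \<longrightarrow> (\<exists>\<sigma>\<in>tdual smultR. \<sigma> x \<noteq> \<sigma> y)) \<and>
     0 \<in> interior UR \<and>
     (\<exists>\<sigma>::nat \<Rightarrow> 'a \<Rightarrow> real. (\<forall>n. \<sigma> n \<in> tdual smultR) \<and> lin_indep_seq \<sigma> \<and>
        (\<forall>n. bdd_above ((\<lambda>A. norm (\<sigma> n A)) ` UR)))
     \<longrightarrow> D0U smultR (\<lambda>r. r) UR \<subseteq> DU smultR UR \<and>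
         CU smultR UR \<subseteq> hyper_top closure_of D0U smultR (\<lambda>r. r) UR \<and>
         CU smultR UR \<subseteq> hyper_top closure_of DU smultR UR)"
    by (rule main_generic) auto
  show "(tvs smultC \<and> separable_space (euclidean :: 'b topology) \<and>
     (\<forall>x y. x \<noteq> y \<longrightarrow> (\<exists>\<sigma>\<in>tdual smultC. \<sigma> x \<noteq> \<sigma> y)) \<and>
     0 \<in> interior UC \<and>
     (\<exists>\<sigma>::nat \<Rightarrow> 'b \<Rightarrow> complex. (\<forall>n. \<sigma> n \<in> tdual smultC) \<and> lin_indep_seq \<sigma> \<and>
        (\<forall>n. bdd_above ((\<lambda>A. norm (\<sigma> n A)) ` UC)))
     \<longrightarrow> D0U smultC Re UC \<subseteq> DU smultC UC \<and>
         CU smultC UC \<subseteq> hyper_top closure_of D0U smultC Re UC \<and>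
         CU smultC UC \<subseteq> hyper_top closure_of DU smultC UC)"
    by (rule main_generic) auto
qed


end
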